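(* Let $R = \bigoplus_{n \ge 0} R_n$ be a Noetherian standard graded ring over a local Artinian ring $R_0$, and let $E$ be a finitely generated graded $R$-module with $\dim E = 0$. Let $d$ be the maximal degree of a minimal homogeneous generator of $E$, let $e = \ell(E)$, and let $q = \sum_{i \le d} \ell(E_i)$. Then: (i) $\operatorname{reg}(E) \le d + e - q$; (ii) $\operatorname{reg}(E) = d + e - q$ if and only if $\ell(E_t) = 1$ for all $d+1 \le t \le d+e-q$ and $\ell(E_t) = 0$ for all $t \ge d+e-q+1$.
   Context: $R_+ = \bigoplus_{n>0}R_n$. For a finitely generated graded $R$-module $E$ of dimension $r$, $a_i(E) = \sup\{n \mid H^i_{R_+}(E)_n \ne 0\}$ and $\operatorname{reg}(E) = \max\{a_i(E)+i \mid 0 \le i \le r\}$. Lengths $\ell$ are over $R_0$. *)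

theory Defs
  imports Main "HOL-Library.Extended_Real"
begin

definition is_ideal :: "'r::comm_ring_1 set \<Rightarrow> bool" where
  "is_ideal I \<longleftrightarrow> 0 \<in> I \<and> (\<forall>x\<in>I. \<forall>y\<in>I. x + y \<in> I) \<and> (\<forall>r. \<forall>x\<in>I. r * x \<in> I)"

definition is_prime_ideal :: "'r::comm_ring_1 set \<Rightarrow> bool" where
  "is_prime_ideal P \<longleftrightarrow> is_ideal P \<and> P \<noteq> UNIV \<and> (\<forall>a b. a * b \<in> P \<longrightarrow> a \<in> P \<or> b \<in> P)"

definition noetherian_ring :: "'r::comm_ring_1 itself \<Rightarrow> bool" where
  "noetherian_ring _ \<longleftrightarrow> (\<forall>I :: nat \<Rightarrow> 'r set. (\<forall>n. is_ideal (I n)) \<and> (\<forall>n. I n \<subseteq> I (Suc n))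
       \<longrightarrow> (\<exists>N. \<forall>n\<ge>N. I n = I N))"

text \<open>Ideals of a subring S (used for R_0 viewed as a ring on its own).\<close>
definition is_ideal_in :: "'r::comm_ring_1 set \<Rightarrow> 'r set \<Rightarrow> bool" where
  "is_ideal_in S I \<longleftrightarrow> I \<subseteq> S \<and> 0 \<in> I \<and> (\<forall>x\<in>I. \<forall>y\<in>I. x + y \<in> I) \<and> (\<forall>r\<in>S. \<forall>x\<in>I. r * x \<in> I)"

definition is_maximal_ideal_in :: "'r::comm_ring_1 set \<Rightarrow> 'r set \<Rightarrow> bool" where
  "is_maximal_ideal_in S M \<longleftrightarrow> is_ideal_in S M \<and> M \<noteq> S \<and>
     (\<forall>J. is_ideal_in S J \<and> M \<subseteq> J \<longrightarrow> J = M \<or> J = S)"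

definition local_ring_on :: "'r::comm_ring_1 set \<Rightarrow> bool" where
  "local_ring_on S \<longleftrightarrow> (\<exists>!M. is_maximal_ideal_in S M)"

definition artinian_ring_on :: "'r::comm_ring_1 set \<Rightarrow> bool" where
  "artinian_ring_on S \<longleftrightarrow> (\<forall>I :: nat \<Rightarrow> 'r set. (\<forall>n. is_ideal_in S (I n)) \<and> (\<forall>n. I (Suc n) \<subseteq> I n)
       \<longrightarrow> (\<exists>N. \<forall>n\<ge>N. I n = I N))"

definition graded_ring :: "(nat \<Rightarrow> 'r::comm_ring_1 set) \<Rightarrow> bool" where
  "graded_ring Rg \<longleftrightarrow>
     (\<forall>n. 0 \<in> Rg n \<and> (\<forall>x\<in>Rg n. \<forall>y\<in>Rg n. x + y \<in> Rg n) \<and> (\<forall>x\<in>Rg n. - x \<in> Rg n)) \<and>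
     1 \<in> Rg 0 \<and>
     (\<forall>m n. \<forall>a\<in>Rg m. \<forall>b\<in>Rg n. a * b \<in> Rg (m + n)) \<and>
     (\<forall>r. \<exists>!c :: nat \<Rightarrow> 'r. finite {n. c n \<noteq> 0} \<and> (\<forall>n. c n \<in> Rg n) \<and> r = (\<Sum>n\<in>{n. c n \<noteq> 0}. c n))"

definition subring_hull :: "'r::comm_ring_1 set \<Rightarrow> 'r set" where
  "subring_hull X = \<Inter>{S. X \<subseteq> S \<and> 0 \<in> S \<and> 1 \<in> S \<and> (\<forall>x\<in>S. \<forall>y\<in>S. x + y \<in> S \<and> x * y \<in> S \<and> - x \<in> S)}"

definition standard_graded :: "(nat \<Rightarrow> 'r::comm_ring_1 set) \<Rightarrow> bool" where
  "standard_graded Rg \<longleftrightarrow> graded_ring Rg \<and> subring_hull (Rg 0 \<union> Rg 1) = UNIV"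

definition Rplus :: "(nat \<Rightarrow> 'r::comm_ring_1 set) \<Rightarrow> 'r set" where
  "Rplus Rg = {r. \<exists>c :: nat \<Rightarrow> 'r. finite {n. c n \<noteq> 0} \<and> (\<forall>n. c n \<in> Rg n) \<and> c 0 = 0 \<and>
                    r = (\<Sum>n\<in>{n. c n \<noteq> 0}. c n)}"

definition graded_module :: "('r::comm_ring_1 \<Rightarrow> 'm::ab_group_add \<Rightarrow> 'm) \<Rightarrow> (nat \<Rightarrow> 'r set) \<Rightarrow> (int \<Rightarrow> 'm set) \<Rightarrow> bool" where
  "graded_module scale Rg Eg \<longleftrightarrow> module scale \<and>
     (\<forall>n. 0 \<in> Eg n \<and> (\<forall>x\<in>Eg n. \<forall>y\<in>Eg n. x + y \<in> Eg n) \<and> (\<forall>x\<in>Eg n. - x \<in> Eg n)) \<and>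
     (\<forall>m n. \<forall>a\<in>Rg m. \<forall>x\<in>Eg n. scale a x \<in> Eg (int m + n)) \<and>
     (\<forall>x. \<exists>!c :: int \<Rightarrow> 'm. finite {n. c n \<noteq> 0} \<and> (\<forall>n. c n \<in> Eg n) \<and> x = (\<Sum>n\<in>{n. c n \<noteq> 0}. c n))"

definition finitely_generated_module :: "('r::comm_ring_1 \<Rightarrow> 'm::ab_group_add \<Rightarrow> 'm) \<Rightarrow> bool" where
  "finitely_generated_module scale \<longleftrightarrow> (\<exists>G. finite G \<and> module.span scale G = UNIV)"

definition minimal_homogeneous_generators :: "('r::comm_ring_1 \<Rightarrow> 'm::ab_group_add \<Rightarrow> 'm) \<Rightarrow> (int \<Rightarrow> 'm set) \<Rightarrow> 'm set \<Rightarrow> bool" where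
  "minimal_homogeneous_generators scale Eg G \<longleftrightarrow>
     G \<subseteq> (\<Union>n. Eg n) \<and> module.span scale G = UNIV \<and> (\<forall>H. H \<subset> G \<longrightarrow> module.span scale H \<noteq> UNIV)"

text \<open>Annihilator and Krull dimension of E (= dim R/ann E).\<close>
definition annihilator :: "('r::comm_ring_1 \<Rightarrow> 'm::ab_group_add \<Rightarrow> 'm) \<Rightarrow> 'r set" where
  "annihilator scale = {r. \<forall>x. scale r x = 0}"

definition prime_chain_ann :: "('r::comm_ring_1 \<Rightarrow> 'm::ab_group_add \<Rightarrow> 'm) \<Rightarrow> nat \<Rightarrow> bool" where
  "prime_chain_ann scale k \<longleftrightarrow> (\<exists>P :: nat \<Rightarrow> 'r set.
      (\<forall>i\<le>k. is_prime_ideal (P i) \<and> annihilator scale \<subseteq> P i) \<and> (\<forall>i<k. P i \<subset> P (Suc i)))"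

text \<open>dim E = k: the supremum of lengths of chains of primes containing ann E is k
  (in particular E \<noteq> 0, since for E = 0 there is no such prime).\<close>
definition module_dim_eq :: "('r::comm_ring_1 \<Rightarrow> 'm::ab_group_add \<Rightarrow> 'm) \<Rightarrow> nat \<Rightarrow> bool" where
  "module_dim_eq scale k \<longleftrightarrow> prime_chain_ann scale k \<and> \<not> prime_chain_ann scale (Suc k)"

definition r0_submodule :: "('r::comm_ring_1 \<Rightarrow> 'm::ab_group_add \<Rightarrow> 'm) \<Rightarrow> (nat \<Rightarrow> 'r set) \<Rightarrow> 'm set \<Rightarrow> 'm set \<Rightarrow> bool" where
  "r0_submodule scale Rg M N \<longleftrightarrow> N \<subseteq> M \<and> 0 \<in> N \<and> (\<forall>x\<in>N. \<forall>y\<in>N. x + y \<in> N) \<and>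
      (\<forall>a\<in>Rg 0. \<forall>x\<in>N. scale a x \<in> N)"

definition r0_length :: "('r::comm_ring_1 \<Rightarrow> 'm::ab_group_add \<Rightarrow> 'm) \<Rightarrow> (nat \<Rightarrow> 'r set) \<Rightarrow> 'm set \<Rightarrow> enat" where
  "r0_length scale Rg M = Sup {enat k | k. \<exists>N :: nat \<Rightarrow> 'm set.
      (\<forall>i\<le>k. r0_submodule scale Rg M (N i)) \<and> (\<forall>i<k. N i \<subset> N (Suc i))}"

text \<open>H^0_{R_+}(E) = \<Gamma>_{R_+}(E) = {x. R_+^k x = 0 for some k}; R_+^k is generated by k-fold products.\<close>
definition H0_Rplus :: "('r::comm_ring_1 \<Rightarrow> 'm::ab_group_add \<Rightarrow> 'm) \<Rightarrow> (nat \<Rightarrow> 'r set) \<Rightarrow> 'm set" where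
  "H0_Rplus scale Rg = {x. \<exists>k. \<forall>a :: nat \<Rightarrow> 'r. (\<forall>i<k. a i \<in> Rplus Rg) \<longrightarrow> scale (\<Prod>i<k. a i) x = 0}"

text \<open>a_0(E) = sup{n. H^0_{R_+}(E)_n \<noteq> 0} (in the extended reals; -\<infinity> if empty).\<close>
definition a0 :: "('r::comm_ring_1 \<Rightarrow> 'm::ab_group_add \<Rightarrow> 'm) \<Rightarrow> (nat \<Rightarrow> 'r set) \<Rightarrow> (int \<Rightarrow> 'm set) \<Rightarrow> ereal" where
  "a0 scale Rg Eg = Sup ((\<lambda>n. ereal (real_of_int n)) ` {n. H0_Rplus scale Rg \<inter> Eg n \<noteq> {0}})"

text \<open>reg(E) = max{a_i(E) + i | 0 \<le> i \<le> dim E}; for modules with dim E = 0 (the only case used)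
  this is a_0(E).\<close>
definition reg_dim0 :: "('r::comm_ring_1 \<Rightarrow> 'm::ab_group_add \<Rightarrow> 'm) \<Rightarrow> (nat \<Rightarrow> 'r set) \<Rightarrow> (int \<Rightarrow> 'm set) \<Rightarrow> ereal" where
  "reg_dim0 scale Rg Eg = Max {a0 scale Rg Eg + ereal (real i) | i. i \<in> {0..(0::nat)}}"

end

theory Submission
  imports Defs
begin

definition ssum :: "'a::ab_group_add set \<Rightarrow> 'a set \<Rightarrow> 'a set" where
  "ssum A B = {a + b | a b. a \<in> A \<and> b \<in> B}"

definition ischain :: "('a set \<Rightarrow> bool) \<Rightarrow> 'a set \<Rightarrow> 'a set \<Rightarrow> (nat \<Rightarrow> 'a set) \<Rightarrow> nat \<Rightarrow> bool" where
  "ischain P A B N k \<longleftrightarrow> (\<forall>i\<le>k. P (N i) \<and> A \<subseteq> N i \<and> N i \<subseteq> B) \<and> (\<forall>i<k. N i \<subset> N (Suc i))"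

definition clen :: "('a set \<Rightarrow> bool) \<Rightarrow> 'a set \<Rightarrow> 'a set \<Rightarrow> enat" where
  "clen P A B = Sup {enat k | k. \<exists>N. ischain P A B N k}"

lemma clen_ge: "ischain P A B N k \<Longrightarrow> enat k \<le> clen P A B"
  unfolding clen_def by (rule Sup_upper) blast

lemma clen_le: "(\<And>N k. ischain P A B N k \<Longrightarrow> k \<le> n) \<Longrightarrow> clen P A B \<le> enat n"
  unfolding clen_def by (rule Sup_least) auto

lemma clen_leI: "(\<And>N k. ischain P A B N k \<Longrightarrow> enat k \<le> m) \<Longrightarrow> clen P A B \<le> m"
  unfolding clen_def by (rule Sup_least) auto

lemma clen_attained:
  assumes "clen P A B = enat n" "P A" "A \<subseteq> B"
  shows "\<exists>N. ischain P A B N n"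
proof -
  let ?S = "{enat k | k. \<exists>N. ischain P A B N k}"
  have "ischain P A B (\<lambda>_. A) 0" using assms unfolding ischain_def by auto
  hence ne: "?S \<noteq> {}" by blast
  have eq: "clen P A B = (if finite ?S then Max ?S else \<infinity>)"
    unfolding clen_def Sup_enat_def using ne by (simp only: if_False)
  have "finite ?S"
  proof (rule ccontr)
    assume "\<not> finite ?S" thus False using eq assms(1) by simp
  qed
  hence "Max ?S \<in> ?S" using ne by (rule Max_in)
  moreover have "Max ?S = enat n" using eq assms(1) \<open>finite ?S\<close> by simp
  ultimately show ?thesis by auto
qed

lemma clen_mono:
  assumes "A \<subseteq> A'" "B' \<subseteq> B"
  shows "clen P A' B' \<le> clen P A B"
proof (rule clen_leI)
  fix N k assume "ischain P A' B' N k"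
  hence "ischain P A B N k" using assms unfolding ischain_def by blast
  thus "enat k \<le> clen P A B" by (rule clen_ge)
qed

lemma clen_map:
  assumes "\<And>X. P X \<Longrightarrow> A \<subseteq> X \<Longrightarrow> X \<subseteq> B \<Longrightarrow> Q (f X) \<and> A' \<subseteq> f X \<and> f X \<subseteq> B'"
    and "\<And>X Y. P X \<Longrightarrow> A \<subseteq> X \<Longrightarrow> Y \<subseteq> B \<Longrightarrow> P Y \<Longrightarrow> X \<subset> Y \<Longrightarrow> f X \<subset> f Y"
  shows "clen P A B \<le> clen Q A' B'"
proof (rule clen_leI)
  fix N k assume c: "ischain P A B N k"
  have "ischain Q A' B' (\<lambda>i. f (N i)) k"
    unfolding ischain_def
  proof (intro conjI allI impI)
    fix i assume ik: "i \<le> k"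
    have h: "P (N i)" "A \<subseteq> N i" "N i \<subseteq> B" using c ik unfolding ischain_def by auto
    show "Q (f (N i))" "A' \<subseteq> f (N i)" "f (N i) \<subseteq> B'" using assms(1)[OF h] by auto
  next
    fix i assume ik: "i < k"
    have h: "P (N i)" "A \<subseteq> N i" "N (Suc i) \<subseteq> B" "P (N (Suc i))" "N i \<subset> N (Suc i)"
      using c ik unfolding ischain_def by auto
    show "f (N i) \<subset> f (N (Suc i))" by (rule assms(2)[OF h])
  qed
  thus "enat k \<le> clen Q A' B'" by (rule clen_ge)
qed

lemma compress:
  assumes "\<forall>i\<le>k. P (N i) \<and> A \<subseteq> N i \<and> N i \<subseteq> B" "\<forall>i<k. N i \<subseteq> N (Suc i)"
  shows "\<exists>M. ischain P A B M (card {i. i < k \<and> N i \<subset> N (Suc i)}) \<and> M (card {i. i < k \<and> N i \<subset> N (Suc i)}) = N k"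
  using assms
proof (induction k)
  case 0
  then show ?case by (intro exI[of _ "\<lambda>_. N 0"]) (auto simp: ischain_def)
next
  case (Suc k)
  let ?s = "card {i. i < k \<and> N i \<subset> N (Suc i)}"
  from Suc obtain M where M: "ischain P A B M ?s" "M ?s = N k" by auto
  show ?case
  proof (cases "N k \<subset> N (Suc k)")
    case True
    have eq: "{i. i < Suc k \<and> N i \<subset> N (Suc i)} = insert k {i. i < k \<and> N i \<subset> N (Suc i)}"
      using True by auto
    have c: "card {i. i < Suc k \<and> N i \<subset> N (Suc i)} = Suc ?s" unfolding eq by simp
    let ?M = "M(Suc ?s := N (Suc k))"
    have "ischain P A B ?M (Suc ?s)" using M True Suc.prems unfolding ischain_def
      by (auto simp: le_Suc_eq less_Suc_eq)
    moreover have "?M (Suc ?s) = N (Suc k)" by simp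
    ultimately show ?thesis unfolding c by blast
  next
    case False
    hence eqN: "N (Suc k) = N k" using Suc.prems by auto
    have eq: "{i. i < Suc k \<and> N i \<subset> N (Suc i)} = {i. i < k \<and> N i \<subset> N (Suc i)}"
      using False by (auto simp: less_Suc_eq)
    show ?thesis unfolding eq using M eqN by auto
  qed
qed

definition subgrp :: "'a::ab_group_add set \<Rightarrow> bool" where
  "subgrp X \<longleftrightarrow> 0 \<in> X \<and> (\<forall>x\<in>X. \<forall>y\<in>X. x + y \<in> X \<and> x - y \<in> X)"

definition goodP :: "('a::ab_group_add set \<Rightarrow> bool) \<Rightarrow> bool" where
  "goodP P \<longleftrightarrow> (\<forall>X. P X \<longrightarrow> subgrp X) \<and> (\<forall>X Y. P X \<longrightarrow> P Y \<longrightarrow> P (X \<inter> Y) \<and> P (ssum X Y))"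

lemma ssum_mono: "X \<subseteq> X' \<Longrightarrow> ssum X C \<subseteq> ssum X' C"
  unfolding ssum_def by blast

lemma ssum_sup: "subgrp C \<Longrightarrow> X \<subseteq> ssum X C" "subgrp X \<Longrightarrow> C \<subseteq> ssum X C"
  unfolding ssum_def subgrp_def by (auto, metis add.right_neutral, metis add.left_neutral)

lemma ssum_le: "subgrp B \<Longrightarrow> X \<subseteq> B \<Longrightarrow> C \<subseteq> B \<Longrightarrow> ssum X C \<subseteq> B"
  unfolding ssum_def subgrp_def by auto

lemma modular_eq:
  assumes "subgrp N'" "N \<subseteq> N'" "N \<inter> C = N' \<inter> C" "ssum N C = ssum N' C" "subgrp C" "subgrp N"
  shows "N = N'"
proof
  show "N' \<subseteq> N"
  proof
    fix x assume x: "x \<in> N'"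
    have "x \<in> ssum N' C" using ssum_sup(1)[OF assms(5)] x by blast
    hence "x \<in> ssum N C" using assms(4) by simp
    then obtain n c where nc: "n \<in> N" "c \<in> C" "x = n + c" unfolding ssum_def by blast
    have "c = x - n" using nc by simp
    moreover have "n \<in> N'" using assms(2) nc by blast
    ultimately have "c \<in> N'" using assms(1) x unfolding subgrp_def by auto
    hence "c \<in> N" using assms(3) nc by blast
    thus "x \<in> N" using assms(6) nc unfolding subgrp_def by auto
  qed
qed (rule assms(2))

lemma clen_split:
  assumes g: "goodP P" and PC: "P C" and PB: "P B" and AC: "A \<subseteq> C" and CB: "C \<subseteq> B"
  shows "clen P A B \<le> clen P A C + clen P C B"
proof (rule clen_leI)
  fix N k assume c: "ischain P A B N k"
  define f where "f i = N i \<inter> C" for i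
  define h where "h i = ssum (N i) C" for i
  have sgC: "subgrp C" using g PC unfolding goodP_def by blast
  have sgB: "subgrp (N i)" if "i \<le> k" for i using g c that unfolding goodP_def ischain_def by blast
  have "\<exists>M. ischain P A C M (card {i. i < k \<and> f i \<subset> f (Suc i)}) \<and> M (card {i. i < k \<and> f i \<subset> f (Suc i)}) = f k"
    apply (rule compress)
    using c g PC AC unfolding ischain_def f_def goodP_def by auto
  then obtain M1 where M1: "ischain P A C M1 (card {i. i < k \<and> f i \<subset> f (Suc i)})" by blast
  have "\<exists>M. ischain P C B M (card {i. i < k \<and> h i \<subset> h (Suc i)}) \<and> M (card {i. i < k \<and> h i \<subset> h (Suc i)}) = h k"
    apply (rule compress)
    subgoal
    proof (intro allI impI conjI)
      fix i assume i: "i \<le> k"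
      have PN: "P (N i)" "N i \<subseteq> B" using c i unfolding ischain_def by auto
      show "P (h i)" using g PN PC unfolding goodP_def h_def by blast
      show "C \<subseteq> h i" unfolding h_def by (rule ssum_sup(2)[OF sgB[OF i]])
      have "subgrp B" using g PB unfolding goodP_def by blast
      show "h i \<subseteq> B" unfolding h_def by (rule ssum_le[OF \<open>subgrp B\<close> PN(2) CB])
    qed
    subgoal
    proof (intro allI impI)
      fix i assume "i < k" hence "N i \<subseteq> N (Suc i)" using c by (auto simp: ischain_def)
      thus "h i \<subseteq> h (Suc i)" unfolding h_def by (rule ssum_mono)
    qed
    done
  then obtain M2 where M2: "ischain P C B M2 (card {i. i < k \<and> h i \<subset> h (Suc i)})" by blast
  have cov: "{i. i < k} \<subseteq> {i. i < k \<and> f i \<subset> f (Suc i)} \<union> {i. i < k \<and> h i \<subset> h (Suc i)}"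
  proof
    fix i assume "i \<in> {i. i < k}"
    hence ik: "i < k" by simp
    have sub: "N i \<subset> N (Suc i)" using c ik unfolding ischain_def by auto
    have "f i \<subseteq> f (Suc i)" using sub unfolding f_def by auto
    moreover have "h i \<subseteq> h (Suc i)" using sub unfolding h_def by (intro ssum_mono) auto
    moreover have "\<not> (f i = f (Suc i) \<and> h i = h (Suc i))"
    proof
      assume "f i = f (Suc i) \<and> h i = h (Suc i)"
      hence "N i = N (Suc i)" using modular_eq[OF sgB[of "Suc i"] _ _ _ sgC sgB[of i]] sub ik unfolding f_def h_def by auto
      thus False using sub by auto
    qed
    ultimately show "i \<in> {i. i < k \<and> f i \<subset> f (Suc i)} \<union> {i. i < k \<and> h i \<subset> h (Suc i)}"
      using ik by auto
  qed
  have "k \<le> card ({i. i < k \<and> f i \<subset> f (Suc i)} \<union> {i. i < k \<and> h i \<subset> h (Suc i)})"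
    using card_mono[OF _ cov] by auto
  also have "\<dots> \<le> card {i. i < k \<and> f i \<subset> f (Suc i)} + card {i. i < k \<and> h i \<subset> h (Suc i)}"
    by (rule card_Un_le)
  finally have "enat k \<le> enat (card {i. i < k \<and> f i \<subset> f (Suc i)}) + enat (card {i. i < k \<and> h i \<subset> h (Suc i)})"
    by simp
  also have "\<dots> \<le> clen P A C + clen P C B"
    by (rule add_mono[OF clen_ge[OF M1] clen_ge[OF M2]])
  finally show "enat k \<le> clen P A C + clen P C B" .
qed

lemma clen_concat:
  assumes "clen P A C = enat a" "clen P C B = enat b" "P A" "P C" "A \<subseteq> C" "C \<subseteq> B"
  shows "enat (a + b) \<le> clen P A B"
proof -
  obtain N1 where N1: "ischain P A C N1 a" using clen_attained assms by blast
  obtain N2 where N2: "ischain P C B N2 b" using clen_attained assms by blast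
  show ?thesis
  proof (cases "b = 0")
    case True
    have "ischain P A B N1 a" using N1 assms unfolding ischain_def by blast
    thus ?thesis using True clen_ge by simp
  next
    case False
    define L where "L i = (if i \<le> a then N1 i else N2 (i - a))" for i
    have "ischain P A B L (a + b)" unfolding ischain_def
    proof (intro conjI allI impI)
      fix i assume "i \<le> a + b"
      show "P (L i)" using N1 N2 \<open>i \<le> a + b\<close> unfolding ischain_def L_def by auto
      show "A \<subseteq> L i"
      proof (cases "i \<le> a")
        case True thus ?thesis using N1 unfolding ischain_def L_def by auto
      next
        case False
        hence "i - a \<le> b" using \<open>i \<le> a + b\<close> by auto
        hence "C \<subseteq> N2 (i - a)" using N2 unfolding ischain_def by auto
        thus ?thesis using False assms(5) unfolding L_def by auto
      qed
      show "L i \<subseteq> B"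
      proof (cases "i \<le> a")
        case True thus ?thesis using N1 assms(6) unfolding ischain_def L_def by auto
      next
        case False
        hence "i - a \<le> b" using \<open>i \<le> a + b\<close> by auto
        thus ?thesis using N2 False unfolding ischain_def L_def by auto
      qed
    next
      fix i assume i: "i < a + b"
      show "L i \<subset> L (Suc i)"
      proof (cases "i < a")
        case True thus ?thesis using N1 unfolding ischain_def L_def by auto
      next
        case F: False
        show ?thesis
        proof (cases "i = a")
          case True
          have "N1 a \<subseteq> C" "C \<subseteq> N2 0" using N1 N2 unfolding ischain_def by auto
          hence "N1 a \<subseteq> N2 0" by blast
          moreover have "N2 0 \<subset> N2 1" using N2 False unfolding ischain_def by auto
          ultimately show ?thesis using True unfolding L_def by auto
        next
          case False
          hence "Suc i - a = Suc (i - a)" "i - a < b" using F i by auto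
          thus ?thesis using N2 F False unfolding ischain_def L_def by auto
        qed
      qed
    qed
    thus ?thesis using clen_ge by blast
  qed
qed

definition gdec :: "('i \<Rightarrow> 'a::ab_group_add set) \<Rightarrow> 'a \<Rightarrow> ('i \<Rightarrow> 'a) \<Rightarrow> bool" where
  "gdec G x c \<longleftrightarrow> finite {n. c n \<noteq> 0} \<and> (\<forall>n. c n \<in> G n) \<and> x = (\<Sum>n\<in>{n. c n \<noteq> 0}. c n)"

definition gok :: "('i \<Rightarrow> 'a::ab_group_add set) \<Rightarrow> bool" where
  "gok G \<longleftrightarrow> (\<forall>n. 0 \<in> G n \<and> (\<forall>x\<in>G n. \<forall>y\<in>G n. x + y \<in> G n) \<and> (\<forall>x\<in>G n. - x \<in> G n)) \<and>
     (\<forall>x. \<exists>!c. gdec G x c)"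

definition gcomp :: "('i \<Rightarrow> 'a::ab_group_add set) \<Rightarrow> 'a \<Rightarrow> 'i \<Rightarrow> 'a" where
  "gcomp G x = (THE c. gdec G x c)"

lemma gdec_alt:
  assumes "finite S" "\<forall>n. c n \<in> G n" "\<forall>n. n \<notin> S \<longrightarrow> c n = 0" "x = (\<Sum>n\<in>S. c n)"
  shows "gdec G x c"
proof -
  have sub: "{n. c n \<noteq> 0} \<subseteq> S" using assms(3) by blast
  hence "finite {n. c n \<noteq> 0}" using assms(1) finite_subset by blast
  moreover have "(\<Sum>n\<in>S. c n) = (\<Sum>n\<in>{n. c n \<noteq> 0}. c n)"
    by (rule sum.mono_neutral_right[OF assms(1) sub]) auto
  ultimately show ?thesis using assms unfolding gdec_def by simp
qed

context fixes G :: "'i \<Rightarrow> 'a::ab_group_add set" assumes gok: "gok G"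
begin

lemma gG: "0 \<in> G n" "x \<in> G n \<Longrightarrow> y \<in> G n \<Longrightarrow> x + y \<in> G n" "x \<in> G n \<Longrightarrow> - x \<in> G n"
  using gok unfolding gok_def by blast+

lemma gG_diff: "x \<in> G n \<Longrightarrow> y \<in> G n \<Longrightarrow> x - y \<in> G n"
  using gG(2)[of x n "- y"] gG(3)[of y n] by simp

lemma gG_sum: "(\<And>a. a \<in> A \<Longrightarrow> f a \<in> G n) \<Longrightarrow> sum f A \<in> G n"
  by (induction A rule: infinite_finite_induct) (auto intro: gG)

lemma gcomp_dec: "gdec G x (gcomp G x)"
proof -
  have "\<exists>!c. gdec G x c" using gok unfolding gok_def by blast
  thus ?thesis unfolding gcomp_def by (rule theI')
qed

lemma gcomp_in: "gcomp G x n \<in> G n"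
  using gcomp_dec unfolding gdec_def by blast

lemma gcomp_fin: "finite {n. gcomp G x n \<noteq> 0}"
  using gcomp_dec unfolding gdec_def by blast

lemma gcomp_eqI:
  assumes "finite S" "\<forall>n. c n \<in> G n" "\<forall>n. n \<notin> S \<longrightarrow> c n = 0" "x = (\<Sum>n\<in>S. c n)"
  shows "gcomp G x = c"
proof -
  have "\<exists>!c. gdec G x c" using gok unfolding gok_def by blast
  moreover have "gdec G x c" by (rule gdec_alt[OF assms])
  ultimately show ?thesis using gcomp_dec by blast
qed

lemma gcomp_sum_eq:
  assumes "finite S" "{n. gcomp G x n \<noteq> 0} \<subseteq> S"
  shows "x = (\<Sum>n\<in>S. gcomp G x n)"
proof -
  have "x = (\<Sum>n\<in>{n. gcomp G x n \<noteq> 0}. gcomp G x n)" using gcomp_dec unfolding gdec_def by blast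
  also have "\<dots> = (\<Sum>n\<in>S. gcomp G x n)"
    by (rule sum.mono_neutral_left[OF assms(1) assms(2)]) auto
  finally show ?thesis .
qed

lemma gcomp_homog: "x \<in> G m \<Longrightarrow> gcomp G x = (\<lambda>n. if n = m then x else 0)"
  by (rule gcomp_eqI[of "{m}"]) (auto intro: gG)

lemma gcomp_zero: "gcomp G 0 = (\<lambda>n. 0)"
  using gcomp_homog[OF gG(1), of undefined] by (auto)

lemma gcomp_add: "gcomp G (x + y) = (\<lambda>n. gcomp G x n + gcomp G y n)"
proof (rule gcomp_eqI[of "{n. gcomp G x n \<noteq> 0} \<union> {n. gcomp G y n \<noteq> 0}"])
  let ?S = "{n. gcomp G x n \<noteq> 0} \<union> {n. gcomp G y n \<noteq> 0}"
  show "finite ?S" using gcomp_fin by blast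
  show "\<forall>n. gcomp G x n + gcomp G y n \<in> G n" using gcomp_in gG(2) by blast
  show "\<forall>n. n \<notin> ?S \<longrightarrow> gcomp G x n + gcomp G y n = 0" by auto
  have "x = (\<Sum>n\<in>?S. gcomp G x n)" "y = (\<Sum>n\<in>?S. gcomp G y n)"
    by (rule gcomp_sum_eq; use gcomp_fin in auto)+
  thus "x + y = (\<Sum>n\<in>?S. gcomp G x n + gcomp G y n)" by (simp add: sum.distrib)
qed

lemma gcomp_neg: "gcomp G (- x) = (\<lambda>n. - gcomp G x n)"
proof -
  have "gcomp G (- x + x) = (\<lambda>n. gcomp G (- x) n + gcomp G x n)" by (rule gcomp_add)
  hence "\<And>n. gcomp G (- x) n + gcomp G x n = 0" using gcomp_zero by (metis add.left_inverse)
  thus ?thesis by (intro ext) (simp add: eq_neg_iff_add_eq_0)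
qed

lemma gcomp_diff: "gcomp G (x - y) = (\<lambda>n. gcomp G x n - gcomp G y n)"
  using gcomp_add[of x "- y"] gcomp_neg[of y] by simp

lemma gcomp_sum: "gcomp G (sum f A) = (\<lambda>n. \<Sum>a\<in>A. gcomp G (f a) n)"
  by (induction A rule: infinite_finite_induct) (auto simp: gcomp_zero gcomp_add)

lemma gcomp_zero_iff: "x = 0 \<longleftrightarrow> (\<forall>n. gcomp G x n = 0)"
proof
  assume "\<forall>n. gcomp G x n = 0"
  thus "x = 0" using gcomp_sum_eq[of "{}" x] by simp
qed (simp add: gcomp_zero)

lemma gcomp_at: "x \<in> G m \<Longrightarrow> gcomp G x m = x"
  by (simp add: gcomp_homog)

lemma gcomp_off: "x \<in> G m \<Longrightarrow> n \<noteq> m \<Longrightarrow> gcomp G x n = 0"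
  by (simp add: gcomp_homog)

lemma G_disj: "x \<in> G m \<Longrightarrow> x \<in> G n \<Longrightarrow> m \<noteq> n \<Longrightarrow> x = 0"
  using gcomp_at[of x m] gcomp_off[of x n m] by simp

end

lemma graded_ring_gok: "graded_ring Rg \<Longrightarrow> gok Rg"
  unfolding graded_ring_def gok_def gdec_def by (elim conjE, intro conjI; assumption)

lemma graded_module_gok: "graded_module scale Rg Eg \<Longrightarrow> gok Eg"
  unfolding graded_module_def gok_def gdec_def by (elim conjE, intro conjI; assumption)

context fixes Rg :: "nat \<Rightarrow> 'r::comm_ring_1 set" assumes gr: "graded_ring Rg"
begin

lemma gok_R: "gok Rg" by (rule graded_ring_gok[OF gr])

lemma R_mult: "a \<in> Rg m \<Longrightarrow> b \<in> Rg n \<Longrightarrow> a * b \<in> Rg (m + n)"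
  using gr unfolding graded_ring_def by (elim conjE) simp

lemma R_one: "1 \<in> Rg 0"
  using gr unfolding graded_ring_def by (elim conjE)

lemma R_mult0: "a \<in> Rg 0 \<Longrightarrow> b \<in> Rg n \<Longrightarrow> a * b \<in> Rg n"
  using R_mult[of a 0 b n] by simp

lemma comp_mult_gen:
  assumes "finite S" "finite T" "{i. gcomp Rg r i \<noteq> 0} \<subseteq> S" "{j. gcomp Rg s j \<noteq> 0} \<subseteq> T"
  shows "gcomp Rg (r * s) n = (\<Sum>i\<in>S. \<Sum>j\<in>T. if i + j = n then gcomp Rg r i * gcomp Rg s j else 0)"
proof -
  have "r * s = (\<Sum>i\<in>S. gcomp Rg r i) * (\<Sum>j\<in>T. gcomp Rg s j)"
    using gcomp_sum_eq[OF gok_R assms(1,3)] gcomp_sum_eq[OF gok_R assms(2,4)] by simp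
  also have "\<dots> = (\<Sum>i\<in>S. \<Sum>j\<in>T. gcomp Rg r i * gcomp Rg s j)"
    by (rule sum_product)
  finally have "gcomp Rg (r * s) n = gcomp Rg (\<Sum>i\<in>S. \<Sum>j\<in>T. gcomp Rg r i * gcomp Rg s j) n" by simp
  also have "\<dots> = (\<Sum>i\<in>S. \<Sum>j\<in>T. gcomp Rg (gcomp Rg r i * gcomp Rg s j) n)"
    by (simp add: gcomp_sum[OF gok_R])
  also have "\<dots> = (\<Sum>i\<in>S. \<Sum>j\<in>T. if i + j = n then gcomp Rg r i * gcomp Rg s j else 0)"
  proof (intro sum.cong refl)
    fix i j
    have "gcomp Rg r i * gcomp Rg s j \<in> Rg (i + j)"
      by (rule R_mult[OF gcomp_in[OF gok_R] gcomp_in[OF gok_R]])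
    thus "gcomp Rg (gcomp Rg r i * gcomp Rg s j) n = (if i + j = n then gcomp Rg r i * gcomp Rg s j else 0)"
      by (simp add: gcomp_homog[OF gok_R] eq_commute)
  qed
  finally show ?thesis .
qed

lemma comp_mult:
  "gcomp Rg (r * s) n = (\<Sum>i\<in>{i. gcomp Rg r i \<noteq> 0}. \<Sum>j\<in>{j. gcomp Rg s j \<noteq> 0}.
      if i + j = n then gcomp Rg r i * gcomp Rg s j else 0)"
  by (rule comp_mult_gen) (auto intro: gcomp_fin[OF gok_R])

lemma comp_mult0: "gcomp Rg (r * s) 0 = gcomp Rg r 0 * gcomp Rg s 0"
proof -
  let ?S = "insert 0 {i. gcomp Rg r i \<noteq> 0}" and ?T = "insert 0 {j. gcomp Rg s j \<noteq> 0}"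
  have "gcomp Rg (r * s) 0 = (\<Sum>i\<in>?S. \<Sum>j\<in>?T. if i + j = 0 then gcomp Rg r i * gcomp Rg s j else 0)"
    by (rule comp_mult_gen) (auto intro: gcomp_fin[OF gok_R])
  also have "\<dots> = (\<Sum>i\<in>?S. if i = 0 then gcomp Rg r 0 * gcomp Rg s 0 else 0)"
  proof (rule sum.cong[OF refl])
    fix i assume "i \<in> ?S"
    have "(\<Sum>j\<in>?T. if i + j = 0 then gcomp Rg r i * gcomp Rg s j else 0)
        = (\<Sum>j\<in>?T. if j = 0 then (if i = 0 then gcomp Rg r i * gcomp Rg s 0 else 0) else 0)"
      by (rule sum.cong) auto
    also have "\<dots> = (if i = 0 then gcomp Rg r 0 * gcomp Rg s 0 else 0)"
      by (subst sum.delta) (auto intro: gcomp_fin[OF gok_R])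
    finally show "(\<Sum>j\<in>?T. if i + j = 0 then gcomp Rg r i * gcomp Rg s j else 0)
        = (if i = 0 then gcomp Rg r 0 * gcomp Rg s 0 else 0)" .
  qed
  also have "\<dots> = gcomp Rg r 0 * gcomp Rg s 0"
    by (subst sum.delta) (auto intro: gcomp_fin[OF gok_R])
  finally show ?thesis .
qed

lemma Rplus_iff: "r \<in> Rplus Rg \<longleftrightarrow> gcomp Rg r 0 = 0"
proof
  assume "r \<in> Rplus Rg"
  then obtain c where c: "finite {n. c n \<noteq> 0}" "\<forall>n. c n \<in> Rg n" "c 0 = 0" "r = (\<Sum>n\<in>{n. c n \<noteq> 0}. c n)"
    unfolding Rplus_def by blast
  have "gcomp Rg r = c" by (rule gcomp_eqI[OF gok_R c(1,2)]) (use c in auto)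
  thus "gcomp Rg r 0 = 0" using c by simp
next
  assume a: "gcomp Rg r 0 = 0"
  show "r \<in> Rplus Rg" unfolding Rplus_def
    using gcomp_dec[OF gok_R, of r] a unfolding gdec_def by blast
qed

end

context fixes scale :: "'r::comm_ring_1 \<Rightarrow> 'm::ab_group_add \<Rightarrow> 'm" and Rg Eg
  assumes gm: "graded_module scale Rg Eg" and gr: "graded_ring Rg"
begin

lemma gok_E: "gok Eg" by (rule graded_module_gok[OF gm])

lemma E_mod: "module scale" using gm unfolding graded_module_def by (elim conjE)

lemma E_scale: "a \<in> Rg m \<Longrightarrow> x \<in> Eg t \<Longrightarrow> scale a x \<in> Eg (int m + t)"
  using gm unfolding graded_module_def by (elim conjE) simp

lemma ecomp_scale_homog:
  assumes x: "x \<in> Eg t"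
  shows "gcomp Eg (scale r x) t' = (if t \<le> t' then scale (gcomp Rg r (nat (t' - t))) x else 0)"
proof -
  interpret module scale by (rule E_mod)
  let ?S = "{i. gcomp Rg r i \<noteq> 0}"
  have fin: "finite ?S" by (rule gcomp_fin[OF gok_R[OF gr]])
  have "r = (\<Sum>i\<in>?S. gcomp Rg r i)" by (rule gcomp_sum_eq[OF gok_R[OF gr] fin]) simp
  hence "scale r x = scale (\<Sum>i\<in>?S. gcomp Rg r i) x" by simp
  hence "scale r x = (\<Sum>i\<in>?S. scale (gcomp Rg r i) x)" by (simp only: scale_sum_left)
  hence "gcomp Eg (scale r x) t' = (\<Sum>i\<in>?S. gcomp Eg (scale (gcomp Rg r i) x) t')"
    by (simp add: gcomp_sum[OF gok_E])
  also have "\<dots> = (\<Sum>i\<in>?S. if i = nat (t' - t) \<and> t \<le> t' then scale (gcomp Rg r i) x else 0)"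
  proof (rule sum.cong[OF refl])
    fix i
    have "scale (gcomp Rg r i) x \<in> Eg (int i + t)"
      by (rule E_scale[OF gcomp_in[OF gok_R[OF gr]] x])
    moreover have "(t' = int i + t) = (i = nat (t' - t) \<and> t \<le> t')" by auto
    ultimately show "gcomp Eg (scale (gcomp Rg r i) x) t' = (if i = nat (t' - t) \<and> t \<le> t' then scale (gcomp Rg r i) x else 0)"
      by (simp add: gcomp_homog[OF gok_E])
  qed
  also have "\<dots> = (if t \<le> t' then scale (gcomp Rg r (nat (t' - t))) x else 0)"
  proof (cases "t \<le> t'")
    case True
    have "(\<Sum>i\<in>?S. if i = nat (t' - t) \<and> t \<le> t' then scale (gcomp Rg r i) x else 0)
       = (\<Sum>i\<in>?S. if i = nat (t' - t) then scale (gcomp Rg r i) x else 0)" using True by simp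
    also have "\<dots> = (if nat (t' - t) \<in> ?S then scale (gcomp Rg r (nat (t' - t))) x else 0)"
      by (rule sum.delta[OF fin])
    also have "\<dots> = scale (gcomp Rg r (nat (t' - t))) x" by auto
    finally show ?thesis using True by simp
  qed simp
  finally show ?thesis .
qed

end

definition rsp :: "(nat \<Rightarrow> 'r::comm_ring_1 set) \<Rightarrow> 'r set \<Rightarrow> 'r set" where
  "rsp Rg Y = {\<Sum>y\<in>Y. a y * y | a. \<forall>y. a y \<in> Rg 0}"

definition Mon :: "'r::comm_ring_1 set \<Rightarrow> nat \<Rightarrow> 'r set" where
  "Mon X n = (\<lambda>f. \<Prod>x\<in>X. x ^ f x) ` {f. sum f X = n}"

lemma Mon_0: "Mon X 0 \<subseteq> {1}" "finite X \<Longrightarrow> 1 \<in> Mon X 0"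
proof -
  show "Mon X 0 \<subseteq> {1}"
  proof
    fix m assume "m \<in> Mon X 0"
    then obtain f where f: "sum f X = 0" "m = (\<Prod>x\<in>X. x ^ f x)" unfolding Mon_def by blast
    show "m \<in> {1}"
    proof (cases "finite X")
      case True
      hence "\<forall>x\<in>X. f x = 0" using f(1) by simp
      thus ?thesis using f(2) by simp
    next
      case False thus ?thesis using f by simp
    qed
  qed
  assume "finite X"
  show "1 \<in> Mon X 0" unfolding Mon_def by (rule image_eqI[of _ _ "\<lambda>_. 0"]) auto
qed

lemma Mon_1: "finite X \<Longrightarrow> x \<in> X \<Longrightarrow> x \<in> Mon X 1"
proof -
  assume X: "finite X" "x \<in> X"
  let ?f = "\<lambda>y. if y = x then 1 else (0::nat)"
  have "sum ?f X = 1" using X by (simp add: sum.delta')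
  moreover have "(\<Prod>y\<in>X. y ^ ?f y) = x"
  proof -
    have "(\<Prod>y\<in>X. y ^ ?f y) = (\<Prod>y\<in>X. if y = x then y else 1)" by (rule prod.cong) auto
    also have "\<dots> = x" using X by (simp add: prod.delta')
    finally show ?thesis .
  qed
  ultimately show "x \<in> Mon X 1" unfolding Mon_def by (auto intro: image_eqI[of _ _ ?f])
qed

lemma Mon_mult: "finite X \<Longrightarrow> m \<in> Mon X a \<Longrightarrow> m' \<in> Mon X b \<Longrightarrow> m * m' \<in> Mon X (a + b)"
proof -
  assume "finite X" "m \<in> Mon X a" "m' \<in> Mon X b"
  then obtain f g where f: "sum f X = a" "m = (\<Prod>x\<in>X. x ^ f x)" and g: "sum g X = b" "m' = (\<Prod>x\<in>X. x ^ g x)"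
    unfolding Mon_def by blast
  have "m * m' = (\<Prod>x\<in>X. x ^ (f x + g x))" using f g by (simp add: power_add prod.distrib)
  moreover have "sum (\<lambda>x. f x + g x) X = a + b" using f g by (simp add: sum.distrib)
  ultimately show ?thesis unfolding Mon_def by (auto intro: image_eqI[of _ _ "\<lambda>x. f x + g x"])
qed

lemma Mon_Suc: "finite X \<Longrightarrow> m \<in> Mon X (Suc n) \<Longrightarrow> \<exists>x\<in>X. \<exists>m'\<in>Mon X n. m = x * m'"
proof -
  assume X: "finite X" and "m \<in> Mon X (Suc n)"
  then obtain f where f: "sum f X = Suc n" "m = (\<Prod>x\<in>X. x ^ f x)" unfolding Mon_def by blast
  have "\<exists>x\<in>X. f x > 0"
  proof (rule ccontr)
    assume "\<not> (\<exists>x\<in>X. f x > 0)"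
    hence "sum f X = 0" by simp
    thus False using f by simp
  qed
  then obtain x where x: "x \<in> X" "f x > 0" by blast
  define g where "g = f(x := f x - 1)"
  have "sum f X = f x + sum f (X - {x})" using X x by (simp add: sum.remove)
  moreover have "sum g X = g x + sum g (X - {x})" using X x by (simp add: sum.remove)
  moreover have "sum g (X - {x}) = sum f (X - {x})" unfolding g_def by (rule sum.cong) auto
  ultimately have sg: "sum g X = n" using f(1) x(2) unfolding g_def by simp
  have "(\<Prod>y\<in>X. y ^ f y) = x ^ f x * (\<Prod>y\<in>X - {x}. y ^ f y)" using X x by (simp add: prod.remove)
  moreover have "(\<Prod>y\<in>X. y ^ g y) = x ^ g x * (\<Prod>y\<in>X - {x}. y ^ g y)" using X x by (simp add: prod.remove)
  moreover have "(\<Prod>y\<in>X - {x}. y ^ g y) = (\<Prod>y\<in>X - {x}. y ^ f y)" unfolding g_def by (rule prod.cong) auto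
  moreover have "x ^ f x = x * x ^ g x" unfolding g_def using x(2)
    by (simp add: power_Suc[symmetric] del: power_Suc)
  ultimately have "m = x * (\<Prod>y\<in>X. y ^ g y)" using f(2) by (simp add: mult.assoc)
  moreover have "(\<Prod>y\<in>X. y ^ g y) \<in> Mon X n" unfolding Mon_def using sg by blast
  ultimately show ?thesis using x(1) by blast
qed

lemma Mon_finite: "finite X \<Longrightarrow> finite (Mon X n)"
proof (induction n)
  case 0 thus ?case using Mon_0(1) finite_subset by blast
next
  case (Suc n)
  have "Mon X (Suc n) \<subseteq> (\<lambda>(x, m). x * m) ` (X \<times> Mon X n)"
    using Mon_Suc[OF Suc.prems] by fastforce
  moreover have "finite ((\<lambda>(x, m). x * m) ` (X \<times> Mon X n))" using Suc by simp
  ultimately show ?case using finite_subset by blast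
qed

lemma Mon_pigeon:
  assumes X: "finite X" and n: "n \<ge> sum N X + 1" and m: "m \<in> Mon X n"
  shows "\<exists>x\<in>X. \<exists>r. m = x ^ N x * r"
proof -
  obtain f where f: "sum f X = n" "m = (\<Prod>x\<in>X. x ^ f x)" using m unfolding Mon_def by blast
  have "\<exists>x\<in>X. f x \<ge> N x"
  proof (rule ccontr)
    assume "\<not> (\<exists>x\<in>X. f x \<ge> N x)"
    hence "\<forall>x\<in>X. f x \<le> N x" by auto
    hence "sum f X \<le> sum N X" by (intro sum_mono) blast
    thus False using f n by simp
  qed
  then obtain x where x: "x \<in> X" "f x \<ge> N x" by blast
  have "m = x ^ f x * (\<Prod>y\<in>X - {x}. y ^ f y)" using X x f by (simp add: prod.remove)
  also have "x ^ f x = x ^ N x * x ^ (f x - N x)" using x(2) by (simp add: power_add[symmetric])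
  finally have "m = x ^ N x * (x ^ (f x - N x) * (\<Prod>y\<in>X - {x}. y ^ f y))" by (simp add: mult.assoc)
  thus ?thesis using x(1) by blast
qed

context fixes Rg :: "nat \<Rightarrow> 'r::comm_ring_1 set" assumes gr: "graded_ring Rg"
begin

lemma R0_0: "0 \<in> Rg n" using gG(1)[OF gok_R[OF gr]] .
lemma R_add: "a \<in> Rg n \<Longrightarrow> b \<in> Rg n \<Longrightarrow> a + b \<in> Rg n" using gG(2)[OF gok_R[OF gr]] .
lemma R_neg: "a \<in> Rg n \<Longrightarrow> - a \<in> Rg n" using gG(3)[OF gok_R[OF gr]] .
lemma R_sum: "(\<And>a. a \<in> A \<Longrightarrow> f a \<in> Rg n) \<Longrightarrow> sum f A \<in> Rg n" using gG_sum[OF gok_R[OF gr]] .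

lemma R0_mult: "a \<in> Rg 0 \<Longrightarrow> b \<in> Rg 0 \<Longrightarrow> a * b \<in> Rg 0" using R_mult[OF gr, of a 0 b 0] by simp

lemma rspI: "\<forall>y. a y \<in> Rg 0 \<Longrightarrow> u = (\<Sum>y\<in>Y. a y * y) \<Longrightarrow> u \<in> rsp Rg Y"
  unfolding rsp_def by blast

context fixes Y :: "'r set" assumes fY: "finite Y"
begin

lemma rsp_0: "0 \<in> rsp Rg Y"
  unfolding rsp_def by (rule CollectI, rule exI[of _ "\<lambda>_. 0"]) (simp add: R0_0)

lemma rsp_add: "u \<in> rsp Rg Y \<Longrightarrow> v \<in> rsp Rg Y \<Longrightarrow> u + v \<in> rsp Rg Y"
proof -
  assume "u \<in> rsp Rg Y" "v \<in> rsp Rg Y"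
  then obtain a b where a: "\<forall>y. a y \<in> Rg 0" "u = (\<Sum>y\<in>Y. a y * y)" and b: "\<forall>y. b y \<in> Rg 0" "v = (\<Sum>y\<in>Y. b y * y)"
    unfolding rsp_def by blast
  have "u + v = (\<Sum>y\<in>Y. (a y + b y) * y)" using a b by (simp add: sum.distrib distrib_right)
  moreover have "\<forall>y. a y + b y \<in> Rg 0" using a b R_add by blast
  ultimately show ?thesis by (intro rspI)
qed

lemma rsp_smul: "c \<in> Rg 0 \<Longrightarrow> u \<in> rsp Rg Y \<Longrightarrow> c * u \<in> rsp Rg Y"
proof -
  assume c: "c \<in> Rg 0" and "u \<in> rsp Rg Y"
  then obtain a where a: "\<forall>y. a y \<in> Rg 0" "u = (\<Sum>y\<in>Y. a y * y)" unfolding rsp_def by blast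
  have "c * u = (\<Sum>y\<in>Y. (c * a y) * y)" using a by (simp add: sum_distrib_left mult.assoc)
  moreover have "\<forall>y. c * a y \<in> Rg 0" using a c R0_mult by blast
  ultimately show ?thesis by (intro rspI)
qed

lemma rsp_neg: "u \<in> rsp Rg Y \<Longrightarrow> - u \<in> rsp Rg Y"
  using rsp_smul[OF R_neg[OF R_one[OF gr]], of u] by simp

lemma rsp_sum: "(\<And>a. a \<in> A \<Longrightarrow> f a \<in> rsp Rg Y) \<Longrightarrow> sum f A \<in> rsp Rg Y"
  by (induction A rule: infinite_finite_induct) (auto intro: rsp_add rsp_0)

lemma rsp_base: "y \<in> Y \<Longrightarrow> c \<in> Rg 0 \<Longrightarrow> c * y \<in> rsp Rg Y"
proof -
  assume y: "y \<in> Y" and c: "c \<in> Rg 0"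
  have "(\<Sum>z\<in>Y. (if z = y then c else 0) * z) = (\<Sum>z\<in>Y. if z = y then c * z else 0)"
    by (rule sum.cong) auto
  also have "\<dots> = c * y" using fY y by (simp add: sum.delta)
  finally have "(\<Sum>z\<in>Y. (if z = y then c else 0) * z) = c * y" .
  moreover have "\<forall>z. (if z = y then c else 0) \<in> Rg 0" using c R0_0 by auto
  ultimately show ?thesis by (intro rspI) auto
qed

lemma rsp_sub: "Y \<subseteq> Rg n \<Longrightarrow> rsp Rg Y \<subseteq> Rg n"
proof
  fix u assume Y: "Y \<subseteq> Rg n" and "u \<in> rsp Rg Y"
  then obtain a where a: "\<forall>y. a y \<in> Rg 0" "u = (\<Sum>y\<in>Y. a y * y)" unfolding rsp_def by blast
  show "u \<in> Rg n" unfolding a(2) using a(1) Y by (intro R_sum) (auto intro: R_mult0[OF gr])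
qed

end

lemma rsp_mult:
  assumes fY: "finite Y" and fZ: "finite Z" and fW: "finite W" and YZ: "\<forall>y\<in>Y. \<forall>z\<in>Z. y * z \<in> W"
    and u: "u \<in> rsp Rg Y" and v: "v \<in> rsp Rg Z"
  shows "u * v \<in> rsp Rg W"
proof -
  obtain a where a: "\<forall>y. a y \<in> Rg 0" "u = (\<Sum>y\<in>Y. a y * y)" using u unfolding rsp_def by blast
  obtain b where b: "\<forall>y. b y \<in> Rg 0" "v = (\<Sum>y\<in>Z. b y * y)" using v unfolding rsp_def by blast
  have "u * v = (\<Sum>y\<in>Y. \<Sum>z\<in>Z. (a y * b z) * (y * z))"
    unfolding a(2) b(2) sum_product by (simp add: ac_simps)
  also have "\<dots> \<in> rsp Rg W"
    using a(1) b(1) YZ by (intro rsp_sum[OF fW] rsp_base[OF fW] R0_mult) auto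
  finally show ?thesis .
qed

end

lemma acc_max:
  assumes acc: "\<forall>I::nat \<Rightarrow> 'a set. (\<forall>n. Q (I n)) \<and> (\<forall>n. I n \<subseteq> I (Suc n)) \<longrightarrow> (\<exists>N. \<forall>n\<ge>N. I n = I N)"
    and ne: "S \<noteq> {}" and SQ: "\<forall>X\<in>S. Q X"
  shows "\<exists>M\<in>S. \<forall>X\<in>S. \<not> M \<subset> X"
proof (rule ccontr)
  assume "\<not> (\<exists>M\<in>S. \<forall>X\<in>S. \<not> M \<subset> X)"
  hence step: "\<forall>M\<in>S. \<exists>X. X \<in> S \<and> M \<subset> X" by blast
  define I where "I = rec_nat (SOME X. X \<in> S) (\<lambda>_ M. SOME X. X \<in> S \<and> M \<subset> X)"
  have I0: "I 0 = (SOME X. X \<in> S)" and IS: "\<And>n. I (Suc n) = (SOME X. X \<in> S \<and> I n \<subset> X)"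
    unfolding I_def by simp_all
  have inS: "I n \<in> S" for n
  proof (induction n)
    case 0 show ?case unfolding I0 using ne by (simp add: some_in_eq)
  next
    case (Suc n)
    have "\<exists>X. X \<in> S \<and> I n \<subset> X" using step Suc by blast
    hence "I (Suc n) \<in> S \<and> I n \<subset> I (Suc n)" unfolding IS by (rule someI_ex)
    thus ?case by blast
  qed
  have strict: "I n \<subset> I (Suc n)" for n
  proof -
    have "\<exists>X. X \<in> S \<and> I n \<subset> X" using step inS[of n] by blast
    hence "I (Suc n) \<in> S \<and> I n \<subset> I (Suc n)" unfolding IS by (rule someI_ex)
    thus ?thesis by blast
  qed
  have "(\<forall>n. Q (I n)) \<and> (\<forall>n. I n \<subseteq> I (Suc n))"
  proof (intro conjI allI)
    fix n show "Q (I n)" using inS[of n] SQ by blast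
    show "I n \<subseteq> I (Suc n)" using strict[of n] by blast
  qed
  hence "\<exists>N. \<forall>n\<ge>N. I n = I N" by (rule acc[rule_format, of I])
  then obtain N where N: "\<forall>n\<ge>N. I n = I N" ..
  have "I (Suc N) = I N" by (rule N[rule_format]) (rule le_SucI, rule order_refl)
  thus False using strict[of N] by blast
qed

lemma dcc_min:
  assumes dcc: "\<forall>I::nat \<Rightarrow> 'a set. (\<forall>n. Q (I n)) \<and> (\<forall>n. I (Suc n) \<subseteq> I n) \<longrightarrow> (\<exists>N. \<forall>n\<ge>N. I n = I N)"
    and ne: "S \<noteq> {}" and SQ: "\<forall>X\<in>S. Q X"
  shows "\<exists>M\<in>S. \<forall>X\<in>S. \<not> X \<subset> M"
proof -
  have acc: "\<forall>I::nat \<Rightarrow> 'a set. (\<forall>n. Q (- I n)) \<and> (\<forall>n. I n \<subseteq> I (Suc n)) \<longrightarrow> (\<exists>N. \<forall>n\<ge>N. I n = I N)"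
  proof (intro allI impI)
    fix I :: "nat \<Rightarrow> 'a set" assume h: "(\<forall>n. Q (- I n)) \<and> (\<forall>n. I n \<subseteq> I (Suc n))"
    have "(\<forall>n. Q ((\<lambda>n. - I n) n)) \<and> (\<forall>n. (\<lambda>n. - I n) (Suc n) \<subseteq> (\<lambda>n. - I n) n)" using h by auto
    hence "\<exists>N. \<forall>n\<ge>N. - I n = - I N" by (rule dcc[rule_format, of "\<lambda>n. - I n"])
    then obtain N where N: "\<forall>n\<ge>N. - I n = - I N" ..
    have "\<forall>n\<ge>N. I n = I N"
    proof (intro allI impI)
      fix n assume "n \<ge> N" hence "- I n = - I N" using N by blast
      thus "I n = I N" by (rule compl_eq_compl_iff[THEN iffD1])
    qed
    thus "\<exists>N. \<forall>n\<ge>N. I n = I N" ..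
  qed
  have ne': "uminus ` S \<noteq> {}" using ne by blast
  have SQ': "\<forall>X\<in>uminus ` S. Q (- X)" using SQ by auto
  have "\<exists>M\<in>uminus ` S. \<forall>X\<in>uminus ` S. \<not> M \<subset> X"
    by (rule acc_max[OF acc ne' SQ'])
  then obtain M' where M': "M' \<in> uminus ` S" "\<forall>X\<in>uminus ` S. \<not> M' \<subset> X" by blast
  then obtain M where M: "M \<in> S" "M' = - M" by blast
  have "\<forall>X\<in>S. \<not> X \<subset> M"
  proof
    fix X assume X: "X \<in> S"
    hence "- X \<in> uminus ` S" by (rule imageI)
    hence "\<not> - M \<subset> - X" using M' M by blast
    thus "\<not> X \<subset> M" by (simp add: compl_less_compl_iff)
  qed
  thus ?thesis using M(1) by blast
qed

definition igen :: "'r::comm_ring_1 set \<Rightarrow> 'r set" where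
  "igen F = {\<Sum>f\<in>F. r f * f | r. True}"

lemma is_idealD: "is_ideal I \<Longrightarrow> 0 \<in> I" "is_ideal I \<Longrightarrow> x \<in> I \<Longrightarrow> y \<in> I \<Longrightarrow> x + y \<in> I"
  "is_ideal I \<Longrightarrow> x \<in> I \<Longrightarrow> r * x \<in> I"
  unfolding is_ideal_def by blast+

lemma ideal_sum: "is_ideal I \<Longrightarrow> (\<And>a. a \<in> A \<Longrightarrow> f a \<in> I) \<Longrightarrow> sum f A \<in> I"
  by (induction A rule: infinite_finite_induct) (auto intro: is_idealD)

lemma ideal_neg: "is_ideal I \<Longrightarrow> x \<in> I \<Longrightarrow> - x \<in> I"
  using is_idealD(3)[of I x "- 1"] by simp

lemma igenI: "x = (\<Sum>f\<in>F. r f * f) \<Longrightarrow> x \<in> igen F"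
  unfolding igen_def by (rule CollectI, rule exI[of _ r]) simp

lemma igenE: "x \<in> igen F \<Longrightarrow> (\<And>r. x = (\<Sum>f\<in>F. r f * f) \<Longrightarrow> P) \<Longrightarrow> P"
  unfolding igen_def by blast

lemma igen_ideal: "finite F \<Longrightarrow> is_ideal (igen F)"
  unfolding is_ideal_def
proof (intro conjI ballI allI)
  assume F: "finite F"
  show "0 \<in> igen F" by (rule igenI[where r="\<lambda>_. 0"]) simp
  fix x y assume "x \<in> igen F" "y \<in> igen F"
  then obtain a b where "x = (\<Sum>f\<in>F. a f * f)" "y = (\<Sum>f\<in>F. b f * f)" by (metis igenE)
  hence "x + y = (\<Sum>f\<in>F. (a f + b f) * f)" by (simp add: sum.distrib distrib_right)
  thus "x + y \<in> igen F" by (rule igenI)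
next
  fix r x assume "x \<in> igen F"
  then obtain a where "x = (\<Sum>f\<in>F. a f * f)" by (metis igenE)
  hence "r * x = (\<Sum>f\<in>F. (r * a f) * f)" by (simp add: sum_distrib_left mult.assoc)
  thus "r * x \<in> igen F" by (rule igenI)
qed

lemma igen_base: "finite F \<Longrightarrow> x \<in> F \<Longrightarrow> x \<in> igen F"
proof -
  assume "finite F" "x \<in> F"
  hence "x = (\<Sum>f\<in>F. (if f = x then 1 else 0) * f)"
    by (simp add: if_distrib[of "\<lambda>a. a * _"] sum.delta' cong: if_cong)
  thus ?thesis by (rule igenI)
qed

lemma igen_le: "is_ideal I \<Longrightarrow> F \<subseteq> I \<Longrightarrow> igen F \<subseteq> I"
  by (auto elim!: igenE intro!: ideal_sum is_idealD(3))

lemma noeth_fg: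
  assumes noe: "noetherian_ring TYPE('r::comm_ring_1)" and I: "is_ideal (I :: 'r set)"
  shows "\<exists>F. finite F \<and> F \<subseteq> I \<and> I = igen F"
proof -
  have acc: "\<forall>J::nat \<Rightarrow> 'r set. (\<forall>n. is_ideal (J n)) \<and> (\<forall>n. J n \<subseteq> J (Suc n)) \<longrightarrow> (\<exists>N. \<forall>n\<ge>N. J n = J N)"
    using noe unfolding noetherian_ring_def by blast
  let ?S = "{igen F | F. finite F \<and> F \<subseteq> I}"
  have "igen {} \<in> ?S" by blast
  hence "\<exists>M\<in>?S. \<forall>X\<in>?S. \<not> M \<subset> X" by (intro acc_max[OF acc]) (auto intro: igen_ideal)
  then obtain F where F: "finite F" "F \<subseteq> I" "\<forall>X\<in>?S. \<not> igen F \<subset> X" by blast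
  have le: "igen F \<subseteq> I" by (rule igen_le[OF I F(2)])
  show ?thesis
  proof (cases "I = igen F")
    case True thus ?thesis using F by blast
  next
    case False
    then obtain x where x: "x \<in> I" "x \<notin> igen F" using le by blast
    have "igen F \<subseteq> igen (insert x F)" by (rule igen_le[OF igen_ideal]) (use F in \<open>auto intro: igen_base\<close>)
    moreover have "x \<in> igen (insert x F)" by (rule igen_base) (use F in auto)
    ultimately have "igen F \<subset> igen (insert x F)" using x by blast
    moreover have "igen (insert x F) \<in> ?S" using F x by blast
    ultimately show ?thesis using F(3) by blast
  qed
qed

context fixes Rg :: "nat \<Rightarrow> 'r::comm_ring_1 set" assumes gr: "graded_ring Rg"
begin

lemma comp_R0_mult: "a \<in> Rg 0 \<Longrightarrow> gcomp Rg (a * s) = (\<lambda>n. a * gcomp Rg s n)"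
proof -
  assume a: "a \<in> Rg 0"
  let ?S = "{n. gcomp Rg s n \<noteq> 0}"
  have fin: "finite ?S" by (rule gcomp_fin[OF gok_R[OF gr]])
  show ?thesis
  proof (rule gcomp_eqI[OF gok_R[OF gr] fin])
    show "\<forall>n. a * gcomp Rg s n \<in> Rg n" using a by (auto intro: R_mult0[OF gr] gcomp_in[OF gok_R[OF gr]])
    show "\<forall>n. n \<notin> ?S \<longrightarrow> a * gcomp Rg s n = 0" by simp
    have "s = (\<Sum>n\<in>?S. gcomp Rg s n)" by (rule gcomp_sum_eq[OF gok_R[OF gr] fin]) simp
    thus "a * s = (\<Sum>n\<in>?S. a * gcomp Rg s n)" by (metis sum_distrib_left)
  qed
qed

lemma comp_plus_mult1: "gcomp Rg r 0 = 0 \<Longrightarrow> gcomp Rg s 0 = 0 \<Longrightarrow> gcomp Rg (r * s) 1 = 0"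
proof -
  assume r: "gcomp Rg r 0 = 0" and s: "gcomp Rg s 0 = 0"
  have "gcomp Rg (r * s) 1 = (\<Sum>i\<in>{i. gcomp Rg r i \<noteq> 0}. \<Sum>j\<in>{j. gcomp Rg s j \<noteq> 0}.
      if i + j = 1 then gcomp Rg r i * gcomp Rg s j else 0)" by (rule comp_mult[OF gr])
  also have "\<dots> = 0"
  proof (rule sum.neutral, rule ballI, rule sum.neutral, rule ballI)
    fix i j assume i: "i \<in> {i. gcomp Rg r i \<noteq> 0}" and j: "j \<in> {j. gcomp Rg s j \<noteq> 0}"
    have "i \<noteq> 0" proof assume "i = 0" thus False using i r by simp qed
    moreover have "j \<noteq> 0" proof assume "j = 0" thus False using j s by simp qed
    ultimately show "(if i + j = 1 then gcomp Rg r i * gcomp Rg s j else 0) = 0" by simp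
  qed
  finally show ?thesis .
qed

lemma Rplus_ideal: "is_ideal (Rplus Rg)"
  unfolding is_ideal_def
proof (intro conjI ballI allI)
  show "0 \<in> Rplus Rg" by (simp add: Rplus_iff[OF gr] gcomp_zero[OF gok_R[OF gr]])
  fix x y assume "x \<in> Rplus Rg" "y \<in> Rplus Rg"
  thus "x + y \<in> Rplus Rg" by (simp add: Rplus_iff[OF gr] gcomp_add[OF gok_R[OF gr]])
next
  fix r x assume "x \<in> Rplus Rg"
  thus "r * x \<in> Rplus Rg" by (simp add: Rplus_iff[OF gr] comp_mult0[OF gr])
qed

lemma R1_gen:
  assumes noe: "noetherian_ring TYPE('r)"
  shows "\<exists>X. finite X \<and> X \<subseteq> Rg 1 \<and> Rg 1 \<subseteq> rsp Rg X"
proof -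
  obtain F where F: "finite F" "F \<subseteq> Rplus Rg" "Rplus Rg = igen F"
    using noeth_fg[OF noe Rplus_ideal] by blast
  define X where "X = (\<lambda>f. gcomp Rg f 1) ` F"
  have fX: "finite X" unfolding X_def using F by simp
  have XR: "X \<subseteq> Rg 1" unfolding X_def using gcomp_in[OF gok_R[OF gr]] by blast
  have "Rg 1 \<subseteq> rsp Rg X"
  proof
    fix y assume y: "y \<in> Rg 1"
    have "gcomp Rg y 0 = 0" by (rule gcomp_off[OF gok_R[OF gr] y]) simp
    hence "y \<in> igen F" using F(3) Rplus_iff[OF gr] by blast
    then obtain r where r: "y = (\<Sum>f\<in>F. r f * f)" by (rule igenE)
    have "y = gcomp Rg y 1" using gcomp_at[OF gok_R[OF gr] y] by simp
    also have "\<dots> = (\<Sum>f\<in>F. gcomp Rg (r f * f) 1)" unfolding r by (simp add: gcomp_sum[OF gok_R[OF gr]])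
    also have "\<dots> = (\<Sum>f\<in>F. gcomp Rg (r f) 0 * gcomp Rg f 1)"
    proof (rule sum.cong[OF refl])
      fix f assume f: "f \<in> F"
      have f0: "gcomp Rg f 0 = 0" using f F(2) Rplus_iff[OF gr] by blast
      have "r f * f = gcomp Rg (r f) 0 * f + (r f - gcomp Rg (r f) 0) * f" by (simp add: algebra_simps)
      hence "gcomp Rg (r f * f) 1 = gcomp Rg (gcomp Rg (r f) 0 * f) 1 + gcomp Rg ((r f - gcomp Rg (r f) 0) * f) 1"
        by (simp add: gcomp_add[OF gok_R[OF gr]])
      also have "gcomp Rg (gcomp Rg (r f) 0 * f) 1 = gcomp Rg (r f) 0 * gcomp Rg f 1"
        by (simp add: comp_R0_mult gcomp_in[OF gok_R[OF gr]])
      also have "gcomp Rg ((r f - gcomp Rg (r f) 0) * f) 1 = 0"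
      proof (rule comp_plus_mult1[OF _ f0])
        have "gcomp Rg (gcomp Rg (r f) 0) 0 = gcomp Rg (r f) 0"
          by (rule gcomp_at[OF gok_R[OF gr] gcomp_in[OF gok_R[OF gr]]])
        thus "gcomp Rg (r f - gcomp Rg (r f) 0) 0 = 0" by (simp add: gcomp_diff[OF gok_R[OF gr]])
      qed
      finally show "gcomp Rg (r f * f) 1 = gcomp Rg (r f) 0 * gcomp Rg f 1" by simp
    qed
    also have "\<dots> \<in> rsp Rg X"
    proof (rule rsp_sum[OF gr fX])
      fix f assume "f \<in> F"
      hence "gcomp Rg f 1 \<in> X" unfolding X_def by blast
      thus "gcomp Rg (r f) 0 * gcomp Rg f 1 \<in> rsp Rg X"
        by (rule rsp_base[OF gr fX]) (rule gcomp_in[OF gok_R[OF gr]])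
    qed
    finally show "y \<in> rsp Rg X" .
  qed
  thus ?thesis using fX XR by blast
qed

lemma rsp_subset: "finite Y \<Longrightarrow> finite W \<Longrightarrow> Y \<subseteq> W \<Longrightarrow> rsp Rg Y \<subseteq> rsp Rg W"
proof
  fix u assume fY: "finite Y" and fW: "finite W" and YW: "Y \<subseteq> W" and "u \<in> rsp Rg Y"
  then obtain a where a: "\<forall>y. a y \<in> Rg 0" "u = (\<Sum>y\<in>Y. a y * y)" unfolding rsp_def by blast
  show "u \<in> rsp Rg W" unfolding a(2) using a(1) YW by (intro rsp_sum[OF gr fW] rsp_base[OF gr fW]) auto
qed

lemma std_mon:
  assumes std: "standard_graded Rg" and fX: "finite X" and XR: "X \<subseteq> Rg 1" and RX: "Rg 1 \<subseteq> rsp Rg X"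
  shows "Rg n \<subseteq> rsp Rg (Mon X n)"
proof -
  let ?S = "{r. \<forall>n. gcomp Rg r n \<in> rsp Rg (Mon X n)}"
  have fM: "finite (Mon X n)" for n by (rule Mon_finite[OF fX])
  have R0S: "Rg 0 \<subseteq> ?S"
  proof
    fix r assume r: "r \<in> Rg 0"
    show "r \<in> ?S"
    proof (intro CollectI allI)
      fix n show "gcomp Rg r n \<in> rsp Rg (Mon X n)"
      proof (cases "n = 0")
        case True
        have "r * 1 \<in> rsp Rg (Mon X 0)" by (rule rsp_base[OF gr fM Mon_0(2)[OF fX] r])
        thus ?thesis using True gcomp_at[OF gok_R[OF gr] r] by simp
      next
        case False thus ?thesis using gcomp_off[OF gok_R[OF gr] r False] rsp_0[OF gr fM] by simp
      qed
    qed
  qed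
  have R1S: "Rg 1 \<subseteq> ?S"
  proof
    fix r assume r: "r \<in> Rg 1"
    show "r \<in> ?S"
    proof (intro CollectI allI)
      fix n show "gcomp Rg r n \<in> rsp Rg (Mon X n)"
      proof (cases "n = 1")
        case True
        have "rsp Rg X \<subseteq> rsp Rg (Mon X 1)" by (rule rsp_subset[OF fX fM]) (use Mon_1[OF fX] in blast)
        thus ?thesis using True gcomp_at[OF gok_R[OF gr] r] r RX by auto
      next
        case False thus ?thesis using gcomp_off[OF gok_R[OF gr] r False] rsp_0[OF gr fM] by simp
      qed
    qed
  qed
  have cl: "\<forall>x\<in>?S. \<forall>y\<in>?S. x + y \<in> ?S \<and> x * y \<in> ?S \<and> - x \<in> ?S"
  proof (intro ballI conjI)
    fix x y assume x: "x \<in> ?S" and y: "y \<in> ?S"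
    show "x + y \<in> ?S" using x y by (auto simp: gcomp_add[OF gok_R[OF gr]] intro: rsp_add[OF gr fM])
    show "- x \<in> ?S" using x by (auto simp: gcomp_neg[OF gok_R[OF gr]] intro: rsp_neg[OF gr fM])
    show "x * y \<in> ?S"
    proof (intro CollectI allI)
      fix n
      show "gcomp Rg (x * y) n \<in> rsp Rg (Mon X n)"
        unfolding comp_mult[OF gr]
      proof (intro rsp_sum[OF gr fM])
        fix i j
        show "(if i + j = n then gcomp Rg x i * gcomp Rg y j else 0) \<in> rsp Rg (Mon X n)"
        proof (cases "i + j = n")
          case True
          have "gcomp Rg x i * gcomp Rg y j \<in> rsp Rg (Mon X (i + j))"
            by (rule rsp_mult[OF gr fM fM fM]) (use x y Mon_mult[OF fX] in auto)
          thus ?thesis using True by simp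
        qed (simp add: rsp_0[OF gr fM])
      qed
    qed
  qed
  have "subring_hull (Rg 0 \<union> Rg 1) \<subseteq> ?S"
    unfolding subring_hull_def
  proof (rule Inter_lower, rule CollectI, intro conjI)
    show "Rg 0 \<union> Rg 1 \<subseteq> ?S" using R0S R1S by blast
    show "0 \<in> ?S" using R0S R0_0[OF gr] by blast
    show "1 \<in> ?S" using R0S R_one[OF gr] by blast
  qed (rule cl)
  hence all: "\<forall>r. \<forall>n. gcomp Rg r n \<in> rsp Rg (Mon X n)" using std unfolding standard_graded_def by blast
  show ?thesis
  proof
    fix y assume y: "y \<in> Rg n"
    show "y \<in> rsp Rg (Mon X n)" using all gcomp_at[OF gok_R[OF gr] y] by metis
  qed
qed

end

lemma ideal_diff: "is_ideal I \<Longrightarrow> x \<in> I \<Longrightarrow> y \<in> I \<Longrightarrow> x - y \<in> I"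
  using is_idealD(2)[of I x "- y"] ideal_neg[of I y] by simp

lemma ideal_mult_r: "is_ideal I \<Longrightarrow> x \<in> I \<Longrightarrow> x * r \<in> I"
  using is_idealD(3)[of I x r] by (simp add: mult.commute)

definition iadd :: "'r::comm_ring_1 set \<Rightarrow> 'r \<Rightarrow> 'r set" where
  "iadd P a = {p + r * a | p r. p \<in> P}"

lemma iadd_ideal:
  assumes P: "is_ideal P" shows "is_ideal (iadd P a)"
  unfolding is_ideal_def
proof (intro conjI ballI allI)
  have "0 + 0 * a \<in> iadd P a" unfolding iadd_def using is_idealD(1)[OF P] by blast
  thus "0 \<in> iadd P a" by simp
next
  fix x y assume "x \<in> iadd P a" "y \<in> iadd P a"
  then obtain p r q s where h: "p \<in> P" "q \<in> P" "x = p + r * a" "y = q + s * a" unfolding iadd_def by blast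
  have "x + y = (p + q) + (r + s) * a" using h by (simp add: algebra_simps)
  moreover have "p + q \<in> P" using is_idealD(2)[OF P h(1,2)] .
  ultimately show "x + y \<in> iadd P a" unfolding iadd_def by blast
next
  fix r x assume "x \<in> iadd P a"
  then obtain p s where ps: "p \<in> P" "x = p + s * a" unfolding iadd_def by blast
  have "r * x = r * p + (r * s) * a" using ps by (simp add: algebra_simps)
  moreover have "r * p \<in> P" using is_idealD(3)[OF P ps(1)] .
  ultimately show "r * x \<in> iadd P a" unfolding iadd_def by blast
qed

lemma iadd_sup1: "is_ideal P \<Longrightarrow> P \<subseteq> iadd P a"
proof
  fix p assume "p \<in> P" hence "p + 0 * a \<in> iadd P a" unfolding iadd_def by blast
  thus "p \<in> iadd P a" by simp
qed

lemma iadd_sup2: "is_ideal P \<Longrightarrow> a \<in> iadd P a"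
proof -
  assume P: "is_ideal P"
  have "0 + 1 * a \<in> iadd P a" unfolding iadd_def using is_idealD(1)[OF P] by blast
  thus "a \<in> iadd P a" by simp
qed

context fixes scale :: "'r::comm_ring_1 \<Rightarrow> 'm::ab_group_add \<Rightarrow> 'm" and Rg Eg
  assumes gm: "graded_module scale Rg Eg" and gr: "graded_ring Rg"
begin

lemma ann_ideal: "is_ideal (annihilator scale)"
proof -
  interpret module scale by (rule E_mod[OF gm gr])
  show ?thesis unfolding is_ideal_def annihilator_def
    by (auto simp: scale_left_distrib simp flip: scale_scale)
qed

lemma ann_homog: "r \<in> annihilator scale \<Longrightarrow> gcomp Rg r n \<in> annihilator scale"
proof -
  interpret module scale by (rule E_mod[OF gm gr])
  assume r: "r \<in> annihilator scale"
  have hom: "scale (gcomp Rg r n) y = 0" if y: "y \<in> Eg t" for y t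
  proof -
    have "gcomp Eg (scale r y) (t + int n) = scale (gcomp Rg r n) y"
      using ecomp_scale_homog[OF gm gr y, of r "t + int n"] by simp
    moreover have "scale r y = 0" using r unfolding annihilator_def by blast
    ultimately show ?thesis by (simp add: gcomp_zero[OF gok_E[OF gm gr]])
  qed
  show ?thesis unfolding annihilator_def
  proof (intro CollectI allI)
    fix e
    let ?S = "{t. gcomp Eg e t \<noteq> 0}"
    have "e = (\<Sum>t\<in>?S. gcomp Eg e t)" by (rule gcomp_sum_eq[OF gok_E[OF gm gr] gcomp_fin[OF gok_E[OF gm gr]]]) simp
    hence "scale (gcomp Rg r n) e = (\<Sum>t\<in>?S. scale (gcomp Rg r n) (gcomp Eg e t))"
      by (metis scale_sum_right)
    also have "\<dots> = 0" by (rule sum.neutral) (auto intro: hom gcomp_in[OF gok_E[OF gm gr]])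
    finally show "scale (gcomp Rg r n) e = 0" .
  qed
qed

lemma dim0_nilpotent:
  assumes noe: "noetherian_ring TYPE('r)" and dim: "module_dim_eq scale 0" and x: "x \<in> Rg 1"
  shows "\<exists>N. x ^ N \<in> annihilator scale"
proof (rule ccontr)
  assume nx: "\<not> (\<exists>N. x ^ N \<in> annihilator scale)"
  have acc: "\<forall>I::nat \<Rightarrow> 'r set. (\<forall>n. is_ideal (I n)) \<and> (\<forall>n. I n \<subseteq> I (Suc n)) \<longrightarrow> (\<exists>N. \<forall>n\<ge>N. I n = I N)"
    using noe unfolding noetherian_ring_def by blast
  let ?S = "{I. is_ideal I \<and> annihilator scale \<subseteq> I \<and> (\<forall>N. x ^ N \<notin> I)}"
  have "annihilator scale \<in> ?S" using ann_ideal nx by blast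
  hence ne: "?S \<noteq> {}" by blast
  have "\<exists>M\<in>?S. \<forall>X\<in>?S. \<not> M \<subset> X" by (rule acc_max[OF acc ne]) blast
  then obtain P where P: "is_ideal P" "annihilator scale \<subseteq> P" "\<forall>N. x ^ N \<notin> P"
    and Pmax: "\<forall>X\<in>?S. \<not> P \<subset> X" by blast
  have Pout: "\<exists>N. x ^ N \<in> iadd P a" if a: "a \<notin> P" for a
  proof (rule ccontr)
    assume "\<not> (\<exists>N. x ^ N \<in> iadd P a)"
    moreover have "P \<subseteq> iadd P a" by (rule iadd_sup1[OF P(1)])
    ultimately have "iadd P a \<in> ?S" using iadd_ideal[OF P(1)] P(2) by blast
    moreover have "P \<subset> iadd P a" using iadd_sup1[OF P(1)] iadd_sup2[OF P(1)] a by blast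
    ultimately show False using Pmax by blast
  qed
  have Pprime: "a * b \<in> P \<Longrightarrow> a \<in> P \<or> b \<in> P" for a b
  proof (rule ccontr)
    assume ab: "a * b \<in> P" and "\<not> (a \<in> P \<or> b \<in> P)"
    hence "a \<notin> P" "b \<notin> P" by auto
    then obtain m n where "x ^ m \<in> iadd P a" "x ^ n \<in> iadd P b" using Pout by blast
    then obtain p1 r1 p2 r2 where h: "p1 \<in> P" "x ^ m = p1 + r1 * a" "p2 \<in> P" "x ^ n = p2 + r2 * b"
      unfolding iadd_def by blast
    have "x ^ (m + n) = p1 * (p2 + r2 * b) + p2 * (r1 * a) + (r1 * r2) * (a * b)"
      by (simp add: power_add h algebra_simps)
    also have "\<dots> \<in> P"
    proof -
      have "p1 * (p2 + r2 * b) \<in> P" by (rule ideal_mult_r[OF P(1) h(1)])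
      moreover have "p2 * (r1 * a) \<in> P" by (rule ideal_mult_r[OF P(1) h(3)])
      moreover have "(r1 * r2) * (a * b) \<in> P" by (rule is_idealD(3)[OF P(1) ab])
      ultimately show ?thesis by (intro is_idealD(2)[OF P(1)])
    qed
    finally show False using P(3) by blast
  qed
  have gR: "gok Rg" by (rule gok_R[OF gr])
  define Ps where "Ps = {r. \<forall>n. gcomp Rg r n \<in> P}"
  define J where "J = {r. gcomp Rg r 0 \<in> P}"
  have Ps_ideal: "is_ideal Ps" unfolding is_ideal_def Ps_def
  proof (intro conjI ballI allI CollectI)
    fix n show "gcomp Rg 0 n \<in> P" using is_idealD(1)[OF P(1)] by (simp add: gcomp_zero[OF gR])
  next
    fix x y n assume "x \<in> {r. \<forall>n. gcomp Rg r n \<in> P}" "y \<in> {r. \<forall>n. gcomp Rg r n \<in> P}"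
    thus "gcomp Rg (x + y) n \<in> P" using is_idealD(2)[OF P(1)] by (simp add: gcomp_add[OF gR])
  next
    fix r y n assume y: "y \<in> {r. \<forall>n. gcomp Rg r n \<in> P}"
    show "gcomp Rg (r * y) n \<in> P" unfolding comp_mult[OF gr]
      using y by (auto intro!: ideal_sum[OF P(1)] is_idealD(3)[OF P(1)] is_idealD(1)[OF P(1)])
  qed
  have x1: "gcomp Rg x = (\<lambda>n. if n = 1 then x else 0)" by (rule gcomp_homog[OF gR x])
  have x_notP: "x \<notin> P" using P(3)[rule_format, of 1] by simp
  have one_notP: "1 \<notin> P" using P(3)[rule_format, of 0] by simp
  have Ps_prime: "is_prime_ideal Ps" unfolding is_prime_ideal_def
  proof (intro conjI allI impI)
    show "is_ideal Ps" by (rule Ps_ideal)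
    show "Ps \<noteq> UNIV"
    proof
      assume "Ps = UNIV" hence "gcomp Rg 1 0 \<in> P" unfolding Ps_def by blast
      thus False using gcomp_at[OF gR R_one[OF gr]] one_notP by simp
    qed
  next
    fix a b assume ab: "a * b \<in> Ps"
    show "a \<in> Ps \<or> b \<in> Ps"
    proof (rule ccontr)
      assume "\<not> (a \<in> Ps \<or> b \<in> Ps)"
      hence "a \<notin> Ps" "b \<notin> Ps" by auto
      then obtain i0 j0 where "gcomp Rg a i0 \<notin> P" "gcomp Rg b j0 \<notin> P" unfolding Ps_def by auto
      define i where "i = (LEAST i. gcomp Rg a i \<notin> P)"
      define j where "j = (LEAST j. gcomp Rg b j \<notin> P)"
      have ai: "gcomp Rg a i \<notin> P" unfolding i_def by (rule LeastI) fact
      have bj: "gcomp Rg b j \<notin> P" unfolding j_def by (rule LeastI) fact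
      have alt: "gcomp Rg a k \<in> P" if "k < i" for k
      proof -
        have "\<not> gcomp Rg a k \<notin> P" by (rule not_less_Least) (use that i_def in simp)
        thus ?thesis by simp
      qed
      have blt: "gcomp Rg b l \<in> P" if "l < j" for l
      proof -
        have "\<not> gcomp Rg b l \<notin> P" by (rule not_less_Least) (use that j_def in simp)
        thus ?thesis by simp
      qed
      let ?A = "insert i {k. gcomp Rg a k \<noteq> 0}" and ?B = "insert j {l. gcomp Rg b l \<noteq> 0}"
      have fA: "finite ?A" and fB: "finite ?B" using gcomp_fin[OF gR] by auto
      let ?T = "\<lambda>k l. if k + l = i + j then gcomp Rg a k * gcomp Rg b l else 0"
      let ?D = "\<lambda>k l. if k = i \<and> l = j then gcomp Rg a i * gcomp Rg b j else 0"
      have eq: "gcomp Rg (a * b) (i + j) = (\<Sum>k\<in>?A. \<Sum>l\<in>?B. ?T k l)"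
        by (rule comp_mult_gen[OF gr fA fB]) auto
      have "(\<Sum>k\<in>?A. \<Sum>l\<in>?B. ?T k l - ?D k l) \<in> P"
      proof (intro ideal_sum[OF P(1)])
        fix k l
        show "?T k l - ?D k l \<in> P"
        proof (cases "k + l = i + j")
          case False thus ?thesis using is_idealD(1)[OF P(1)] by auto
        next
          case True
          show ?thesis
          proof (cases "k < i")
            case True
            hence "?T k l - ?D k l = gcomp Rg a k * gcomp Rg b l" using \<open>k + l = i + j\<close> by simp
            thus ?thesis using ideal_mult_r[OF P(1) alt[OF True]] by simp
          next
            case False
            show ?thesis
            proof (cases "k = i")
              case True thus ?thesis using \<open>k + l = i + j\<close> is_idealD(1)[OF P(1)] by auto
            next
              case False
              hence "l < j" using \<open>\<not> k < i\<close> \<open>k + l = i + j\<close> by auto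
              have "?T k l - ?D k l = gcomp Rg a k * gcomp Rg b l" using \<open>k + l = i + j\<close> \<open>k \<noteq> i\<close> by simp
              thus ?thesis using is_idealD(3)[OF P(1) blt[OF \<open>l < j\<close>]] by simp
            qed
          qed
        qed
      qed
      moreover have "(\<Sum>k\<in>?A. \<Sum>l\<in>?B. ?T k l - ?D k l)
          = (\<Sum>k\<in>?A. \<Sum>l\<in>?B. ?T k l) - (\<Sum>k\<in>?A. \<Sum>l\<in>?B. ?D k l)"
        by (simp add: sum_subtractf)
      moreover have "(\<Sum>k\<in>?A. \<Sum>l\<in>?B. ?D k l) = gcomp Rg a i * gcomp Rg b j"
      proof -
        have "(\<Sum>k\<in>?A. \<Sum>l\<in>?B. ?D k l) = (\<Sum>k\<in>?A. if k = i then gcomp Rg a i * gcomp Rg b j else 0)"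
        proof (rule sum.cong[OF refl])
          fix k assume "k \<in> ?A"
          have "(\<Sum>l\<in>?B. ?D k l) = (\<Sum>l\<in>?B. if l = j then (if k = i then gcomp Rg a i * gcomp Rg b j else 0) else 0)"
            by (rule sum.cong) auto
          also have "\<dots> = (if k = i then gcomp Rg a i * gcomp Rg b j else 0)" using fB by (simp add: sum.delta)
          finally show "(\<Sum>l\<in>?B. ?D k l) = (if k = i then gcomp Rg a i * gcomp Rg b j else 0)" .
        qed
        also have "\<dots> = gcomp Rg a i * gcomp Rg b j" using fA by (simp add: sum.delta)
        finally show ?thesis .
      qed
      moreover have "gcomp Rg (a * b) (i + j) \<in> P" using ab unfolding Ps_def by blast
      ultimately have "gcomp Rg (a * b) (i + j) - gcomp Rg a i * gcomp Rg b j \<in> P"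
        "gcomp Rg (a * b) (i + j) \<in> P" using eq by simp_all
      hence "gcomp Rg (a * b) (i + j) - (gcomp Rg (a * b) (i + j) - gcomp Rg a i * gcomp Rg b j) \<in> P"
        using ideal_diff[OF P(1)] by blast
      hence "gcomp Rg a i * gcomp Rg b j \<in> P" by simp
      thus False using Pprime ai bj by blast
    qed
  qed
  have J_prime: "is_prime_ideal J" unfolding is_prime_ideal_def
  proof (intro conjI allI impI)
    show "is_ideal J" unfolding is_ideal_def J_def
      using is_idealD[OF P(1)] by (auto simp: gcomp_zero[OF gR] gcomp_add[OF gR] comp_mult0[OF gr])
    show "J \<noteq> UNIV"
    proof
      assume "J = UNIV" hence "gcomp Rg 1 0 \<in> P" unfolding J_def by blast
      thus False using gcomp_at[OF gR R_one[OF gr]] one_notP by simp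
    qed
  next
    fix a b assume "a * b \<in> J"
    thus "a \<in> J \<or> b \<in> J" unfolding J_def using Pprime by (simp add: comp_mult0[OF gr])
  qed
  have "Ps \<subseteq> J" unfolding Ps_def J_def by blast
  moreover have "x \<in> J" unfolding J_def using x1 is_idealD(1)[OF P(1)] by simp
  moreover have "x \<notin> Ps" unfolding Ps_def using x1 x_notP by auto
  ultimately have PsJ: "Ps \<subset> J" by blast
  have annPs: "annihilator scale \<subseteq> Ps" unfolding Ps_def using ann_homog P(2) by blast
  have annJ: "annihilator scale \<subseteq> J" using annPs PsJ by blast
  have "prime_chain_ann scale (Suc 0)" unfolding prime_chain_ann_def
  proof (rule exI[of _ "\<lambda>i. if i = 0 then Ps else J"], intro conjI allI impI)
    fix i assume "i \<le> Suc 0"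
    show "is_prime_ideal (if i = 0 then Ps else J)" using Ps_prime J_prime by simp
    show "annihilator scale \<subseteq> (if i = 0 then Ps else J)" using annPs annJ by simp
  next
    fix i assume "i < Suc 0"
    thus "(if i = 0 then Ps else J) \<subset> (if Suc i = 0 then Ps else J)" using PsJ by simp
  qed
  thus False using dim unfolding module_dim_eq_def by blast
qed

end

definition msp :: "('r::comm_ring_1 \<Rightarrow> 'm::ab_group_add \<Rightarrow> 'm) \<Rightarrow> (nat \<Rightarrow> 'r set) \<Rightarrow> 'm set \<Rightarrow> 'm set" where
  "msp scale Rg Y = {\<Sum>y\<in>Y. scale (a y) y | a. \<forall>y. a y \<in> Rg 0}"

lemma mspI: "\<forall>y. a y \<in> Rg 0 \<Longrightarrow> u = (\<Sum>y\<in>Y. scale (a y) y) \<Longrightarrow> u \<in> msp scale Rg Y"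
  unfolding msp_def by blast

lemma mspE: "u \<in> msp scale Rg Y \<Longrightarrow> (\<And>a. \<forall>y. a y \<in> Rg 0 \<Longrightarrow> u = (\<Sum>y\<in>Y. scale (a y) y) \<Longrightarrow> P) \<Longrightarrow> P"
  unfolding msp_def by blast

lemma minimal_gens_facts:
  assumes mod: "module scale" and fg: "finitely_generated_module scale"
    and mg: "minimal_homogeneous_generators scale Eg G"
  shows "finite G" "0 \<notin> G" "G \<subseteq> (\<Union>n. Eg n)" "module.span scale G = UNIV"
proof -
  interpret module scale by (rule mod)
  show G: "G \<subseteq> (\<Union>n. Eg n)" and sp: "span G = UNIV" using mg unfolding minimal_homogeneous_generators_def by blast+
  have minl: "\<And>H. H \<subset> G \<Longrightarrow> span H \<noteq> UNIV" using mg unfolding minimal_homogeneous_generators_def by blast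
  obtain F where F: "finite F" "span F = UNIV" using fg unfolding finitely_generated_module_def by blast
  have "\<forall>f\<in>F. \<exists>t. finite t \<and> t \<subseteq> G \<and> f \<in> span t"
  proof
    fix f assume "f \<in> F"
    have "f \<in> span G" using sp by simp
    then obtain t r where tr: "f = (\<Sum>a\<in>t. scale (r a) a)" "finite t" "t \<subseteq> G" unfolding span_explicit by blast
    have "f \<in> span t" unfolding tr(1) by (intro span_sum span_scale span_base)
    thus "\<exists>t. finite t \<and> t \<subseteq> G \<and> f \<in> span t" using tr by blast
  qed
  then obtain T where T: "\<forall>f\<in>F. finite (T f) \<and> T f \<subseteq> G \<and> f \<in> span (T f)" by metis
  let ?G' = "\<Union>f\<in>F. T f"
  have fG': "finite ?G'" using F T by blast
  have G'G: "?G' \<subseteq> G" using T by blast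
  have "F \<subseteq> span ?G'"
  proof
    fix f assume f: "f \<in> F"
    hence "f \<in> span (T f)" using T by blast
    moreover have "span (T f) \<subseteq> span ?G'" by (rule span_mono) (use f in blast)
    ultimately show "f \<in> span ?G'" by blast
  qed
  hence "span F \<subseteq> span ?G'" using span_mono span_span by metis
  hence "span ?G' = UNIV" using F by blast
  hence "?G' = G" using minl G'G by blast
  thus "finite G" using fG' by simp
  show "0 \<notin> G"
  proof
    assume z: "0 \<in> G"
    have "G \<subseteq> span (G - {0})"
    proof
      fix g assume "g \<in> G"
      thus "g \<in> span (G - {0})" by (cases "g = 0") (auto intro: span_zero span_base)
    qed
    hence "span G \<subseteq> span (G - {0})" using span_mono span_span by metis
    hence "span (G - {0}) = UNIV" using sp by blast
    moreover have "G - {0} \<subset> G" using z by blast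
    ultimately show False using minl by blast
  qed
qed

context fixes scale :: "'r::comm_ring_1 \<Rightarrow> 'm::ab_group_add \<Rightarrow> 'm" and Rg Eg G X
  assumes gm: "graded_module scale Rg Eg" and gr: "graded_ring Rg"
    and fG: "finite G" and G0: "0 \<notin> G" and GE: "G \<subseteq> (\<Union>n. Eg n)" and spG: "module.span scale G = UNIV"
    and fX: "finite X" and XR: "X \<subseteq> Rg 1" and RM: "\<And>n. Rg n \<subseteq> rsp Rg (Mon X n)"
begin

interpretation M: module scale by (rule E_mod[OF gm gr])

lemma gokE: "gok Eg" by (rule gok_E[OF gm gr])
lemma gokR: "gok Rg" by (rule gok_R[OF gr])

definition deg :: "'m \<Rightarrow> int" where "deg g = (SOME t. g \<in> Eg t)"

lemma deg_in: "g \<in> G \<Longrightarrow> g \<in> Eg (deg g)"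
  unfolding deg_def using GE by (metis (mono_tags, lifting) UN_E someI_ex subsetD)

lemma deg_unique: "g \<in> G \<Longrightarrow> g \<in> Eg t \<Longrightarrow> deg g = t"
  using G_disj[OF gokE deg_in] G0 by blast

lemma Mon_R: "Mon X n \<subseteq> Rg n"
proof (induction n)
  case 0 thus ?case using Mon_0(1) R_one[OF gr] by blast
next
  case (Suc n)
  show ?case
  proof
    fix m assume "m \<in> Mon X (Suc n)"
    then obtain x m' where "x \<in> X" "m' \<in> Mon X n" "m = x * m'" using Mon_Suc[OF fX] by blast
    thus "m \<in> Rg (Suc n)" using R_mult[OF gr, of x 1 m' n] XR Suc by auto
  qed
qed

lemma msp_0: "0 \<in> msp scale Rg Y"
  by (rule mspI[where a="\<lambda>_. 0"]) (simp_all add: R0_0[OF gr])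

lemma msp_add: "u \<in> msp scale Rg Y \<Longrightarrow> v \<in> msp scale Rg Y \<Longrightarrow> u + v \<in> msp scale Rg Y"
proof -
  assume u: "u \<in> msp scale Rg Y" and v: "v \<in> msp scale Rg Y"
  obtain a where a: "\<forall>y. a y \<in> Rg 0" "u = (\<Sum>y\<in>Y. scale (a y) y)" using u by (rule mspE)
  obtain b where b: "\<forall>y. b y \<in> Rg 0" "v = (\<Sum>y\<in>Y. scale (b y) y)" using v by (rule mspE)
  have "u + v = (\<Sum>y\<in>Y. scale (a y + b y) y)" using a b by (simp add: sum.distrib M.scale_left_distrib)
  moreover have "\<forall>y. a y + b y \<in> Rg 0" using a b R_add[OF gr] by blast
  ultimately show ?thesis by (intro mspI)
qed

lemma msp_smul: "c \<in> Rg 0 \<Longrightarrow> u \<in> msp scale Rg Y \<Longrightarrow> scale c u \<in> msp scale Rg Y"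
proof -
  assume c: "c \<in> Rg 0" and u: "u \<in> msp scale Rg Y"
  obtain a where a: "\<forall>y. a y \<in> Rg 0" "u = (\<Sum>y\<in>Y. scale (a y) y)" using u by (rule mspE)
  have "scale c u = (\<Sum>y\<in>Y. scale (c * a y) y)" using a by (simp add: M.scale_sum_right)
  moreover have "\<forall>y. c * a y \<in> Rg 0" using a c R0_mult[OF gr] by blast
  ultimately show ?thesis by (intro mspI)
qed

lemma msp_sum: "(\<And>a. a \<in> A \<Longrightarrow> f a \<in> msp scale Rg Y) \<Longrightarrow> sum f A \<in> msp scale Rg Y"
  by (induction A rule: infinite_finite_induct) (auto intro: msp_add msp_0)

lemma msp_base: "finite Y \<Longrightarrow> y \<in> Y \<Longrightarrow> c \<in> Rg 0 \<Longrightarrow> scale c y \<in> msp scale Rg Y"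
proof -
  assume fY: "finite Y" and y: "y \<in> Y" and c: "c \<in> Rg 0"
  have "(\<Sum>z\<in>Y. scale (if z = y then c else 0) z) = (\<Sum>z\<in>Y. if z = y then scale c z else 0)"
    by (rule sum.cong) auto
  also have "\<dots> = scale c y" using fY y by (simp add: sum.delta)
  finally have "scale c y = (\<Sum>z\<in>Y. scale (if z = y then c else 0) z)" by simp
  moreover have "\<forall>z. (if z = y then c else 0) \<in> Rg 0" using c R0_0[OF gr] by auto
  ultimately show ?thesis by (intro mspI)
qed

lemma elem_repr: "\<exists>u. e = (\<Sum>g\<in>G. scale (u g) g)"
  using spG M.span_finite[OF fG] by blast

lemma ecomp_formula:
  "gcomp Eg (\<Sum>g\<in>G. scale (u g) g) t = (\<Sum>g\<in>G. if deg g \<le> t then scale (gcomp Rg (u g) (nat (t - deg g))) g else 0)"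
  by (simp add: gcomp_sum[OF gokE] ecomp_scale_homog[OF gm gr deg_in])

lemma vanish_crit:
  assumes "\<forall>g\<in>G. deg g \<le> t \<longrightarrow> (\<forall>m\<in>Mon X (nat (t - deg g)). scale m g = 0)"
  shows "Eg t = {0}"
proof -
  have "y = 0" if y: "y \<in> Eg t" for y
  proof -
    obtain u where u: "y = (\<Sum>g\<in>G. scale (u g) g)" using elem_repr by blast
    have "y = gcomp Eg y t" using gcomp_at[OF gokE y] by simp
    also have "\<dots> = (\<Sum>g\<in>G. if deg g \<le> t then scale (gcomp Rg (u g) (nat (t - deg g))) g else 0)"
      unfolding u by (rule ecomp_formula)
    also have "\<dots> = 0"
    proof (rule sum.neutral, rule ballI)
      fix g assume g: "g \<in> G"
      show "(if deg g \<le> t then scale (gcomp Rg (u g) (nat (t - deg g))) g else 0) = 0"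
      proof (cases "deg g \<le> t")
        case True
        let ?n = "nat (t - deg g)"
        have "gcomp Rg (u g) ?n \<in> rsp Rg (Mon X ?n)" using RM gcomp_in[OF gokR] by blast
        then obtain a where a: "gcomp Rg (u g) ?n = (\<Sum>m\<in>Mon X ?n. a m * m)" unfolding rsp_def by blast
        have "scale (gcomp Rg (u g) ?n) g = (\<Sum>m\<in>Mon X ?n. scale (a m) (scale m g))"
          unfolding a by (simp add: M.scale_sum_left)
        also have "\<dots> = 0" using assms g True by simp
        finally show ?thesis using True by simp
      qed simp
    qed
    finally show ?thesis .
  qed
  thus ?thesis using gG(1)[OF gokE] by blast
qed

lemma span_deg:
  "Eg t \<subseteq> msp scale Rg ((\<lambda>(g, m). scale m g) ` (SIGMA g:{g\<in>G. deg g \<le> t}. Mon X (nat (t - deg g))))"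
  (is "_ \<subseteq> msp scale Rg ?F")
proof
  have fF: "finite ?F" using fG Mon_finite[OF fX] by auto
  fix y assume y: "y \<in> Eg t"
  obtain u where u: "y = (\<Sum>g\<in>G. scale (u g) g)" using elem_repr by blast
  have "y = gcomp Eg y t" using gcomp_at[OF gokE y] by simp
  also have "\<dots> = (\<Sum>g\<in>G. if deg g \<le> t then scale (gcomp Rg (u g) (nat (t - deg g))) g else 0)"
    unfolding u by (rule ecomp_formula)
  also have "\<dots> \<in> msp scale Rg ?F"
  proof (rule msp_sum)
    fix g assume g: "g \<in> G"
    show "(if deg g \<le> t then scale (gcomp Rg (u g) (nat (t - deg g))) g else 0) \<in> msp scale Rg ?F"
    proof (cases "deg g \<le> t")
      case True
      let ?n = "nat (t - deg g)"
      have "gcomp Rg (u g) ?n \<in> rsp Rg (Mon X ?n)" using RM gcomp_in[OF gokR] by blast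
      then obtain a where a: "\<forall>m. a m \<in> Rg 0" "gcomp Rg (u g) ?n = (\<Sum>m\<in>Mon X ?n. a m * m)" unfolding rsp_def by blast
      have "scale (gcomp Rg (u g) ?n) g = (\<Sum>m\<in>Mon X ?n. scale (a m) (scale m g))"
        unfolding a by (simp add: M.scale_sum_left)
      also have "\<dots> \<in> msp scale Rg ?F"
      proof (rule msp_sum)
        fix m assume m: "m \<in> Mon X ?n"
        have "scale m g \<in> ?F" using g True m by auto
        thus "scale (a m) (scale m g) \<in> msp scale Rg ?F" using msp_base[OF fF] a(1) by blast
      qed
      finally show ?thesis using True by simp
    qed (simp add: msp_0)
  qed
  finally show "y \<in> msp scale Rg ?F" .
qed

end

definition r0sub :: "('r::comm_ring_1 \<Rightarrow> 'm::ab_group_add \<Rightarrow> 'm) \<Rightarrow> (nat \<Rightarrow> 'r set) \<Rightarrow> 'm set \<Rightarrow> bool" where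
  "r0sub scale Rg N \<longleftrightarrow> 0 \<in> N \<and> (\<forall>x\<in>N. \<forall>y\<in>N. x + y \<in> N) \<and> (\<forall>a\<in>Rg 0. \<forall>x\<in>N. scale a x \<in> N)"

lemma r0_length_clen: "r0_length scale Rg M = clen (r0sub scale Rg) {} M"
proof -
  have "\<And>N. r0_submodule scale Rg M N = (r0sub scale Rg N \<and> {} \<subseteq> N \<and> N \<subseteq> M)"
    unfolding r0_submodule_def r0sub_def by blast
  thus ?thesis unfolding r0_length_def clen_def ischain_def by simp
qed

lemma clen_zero_lower:
  assumes "\<And>X. P X \<Longrightarrow> 0 \<in> X"
  shows "clen P {} M = clen P {0} M"
proof (rule antisym)
  show "clen P {} M \<le> clen P {0} M" by (rule clen_map[where f=id]) (auto dest: assms)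
  show "clen P {0} M \<le> clen P {} M" by (rule clen_mono) auto
qed

lemma clen_trivial: "clen P A A = 0"
proof -
  have "clen P A A \<le> enat 0"
  proof (rule clen_le)
    fix N k assume c: "ischain P A A N k"
    show "k \<le> 0"
    proof (rule ccontr)
      assume "\<not> k \<le> 0"
      hence k1: "0 < k" "1 \<le> k" by auto
      have "N 0 \<subset> N (Suc 0)" using c k1(1) unfolding ischain_def by blast
      moreover have "N 0 = A" using c unfolding ischain_def by blast
      moreover have "N (Suc 0) = A" using c k1(2) unfolding ischain_def by auto
      ultimately show False by simp
    qed
  qed
  thus ?thesis by (metis le_zero_eq zero_enat_def)
qed

context fixes Rg :: "nat \<Rightarrow> 'r::comm_ring_1 set" assumes gr: "graded_ring Rg"
begin

lemma R0I_good: "goodP (is_ideal_in (Rg 0))"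
  unfolding goodP_def
proof (intro conjI allI impI)
  fix X assume X: "is_ideal_in (Rg 0) X"
  show "subgrp X" unfolding subgrp_def
  proof (intro conjI ballI)
    show "0 \<in> X" using X unfolding is_ideal_in_def by blast
    fix x y assume "x \<in> X" "y \<in> X"
    moreover have "- 1 \<in> Rg 0" using R_neg[OF gr R_one[OF gr]] .
    ultimately have "x + y \<in> X" "x + (- 1) * y \<in> X" using X unfolding is_ideal_in_def by blast+
    thus "x + y \<in> X" "x - y \<in> X" by simp_all
  qed
next
  fix X Y assume X: "is_ideal_in (Rg 0) X" and Y: "is_ideal_in (Rg 0) Y"
  show "is_ideal_in (Rg 0) (X \<inter> Y)" using X Y unfolding is_ideal_in_def by blast
  show "is_ideal_in (Rg 0) (ssum X Y)" unfolding is_ideal_in_def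
  proof (intro conjI ballI)
    show "ssum X Y \<subseteq> Rg 0" using X Y R_add[OF gr] unfolding is_ideal_in_def ssum_def by blast
    have "0 + 0 \<in> ssum X Y" using X Y unfolding is_ideal_in_def ssum_def by blast
    thus "0 \<in> ssum X Y" by simp
  next
    fix u v assume "u \<in> ssum X Y" "v \<in> ssum X Y"
    then obtain a b c d where h: "a \<in> X" "b \<in> Y" "u = a + b" "c \<in> X" "d \<in> Y" "v = c + d" unfolding ssum_def by blast
    have "a + c \<in> X" "b + d \<in> Y" using h X Y unfolding is_ideal_in_def by blast+
    moreover have "u + v = (a + c) + (b + d)" using h by (simp add: algebra_simps)
    ultimately show "u + v \<in> ssum X Y" unfolding ssum_def by blast
  next
    fix r u assume r: "r \<in> Rg 0" and "u \<in> ssum X Y"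
    then obtain a b where h: "a \<in> X" "b \<in> Y" "u = a + b" unfolding ssum_def by blast
    have "r * a \<in> X" "r * b \<in> Y" using h X Y r unfolding is_ideal_in_def by blast+
    moreover have "r * u = r * a + r * b" using h by (simp add: algebra_simps)
    ultimately show "r * u \<in> ssum X Y" unfolding ssum_def by blast
  qed
qed

lemma R0_acc:
  assumes noe: "noetherian_ring TYPE('r)"
  shows "\<forall>I::nat \<Rightarrow> 'r set. (\<forall>n. is_ideal_in (Rg 0) (I n)) \<and> (\<forall>n. I n \<subseteq> I (Suc n)) \<longrightarrow> (\<exists>N. \<forall>n\<ge>N. I n = I N)"
proof (intro allI impI)
  fix I :: "nat \<Rightarrow> 'r set" assume h: "(\<forall>n. is_ideal_in (Rg 0) (I n)) \<and> (\<forall>n. I n \<subseteq> I (Suc n))"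
  define J where "J n = {r. gcomp Rg r 0 \<in> I n}" for n
  have Jid: "is_ideal (J n)" for n
  proof -
    have In: "is_ideal_in (Rg 0) (I n)" using h by blast
    show ?thesis unfolding is_ideal_def J_def
    proof (intro conjI ballI allI CollectI)
      show "gcomp Rg 0 0 \<in> I n" using In unfolding is_ideal_in_def by (simp add: gcomp_zero[OF gok_R[OF gr]])
    next
      fix x y assume "x \<in> {r. gcomp Rg r 0 \<in> I n}" "y \<in> {r. gcomp Rg r 0 \<in> I n}"
      thus "gcomp Rg (x + y) 0 \<in> I n" using In unfolding is_ideal_in_def by (simp add: gcomp_add[OF gok_R[OF gr]])
    next
      fix r x assume "x \<in> {r. gcomp Rg r 0 \<in> I n}"
      thus "gcomp Rg (r * x) 0 \<in> I n" using In gcomp_in[OF gok_R[OF gr], of r 0]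
        unfolding is_ideal_in_def by (simp add: comp_mult0[OF gr])
    qed
  qed
  have "(\<forall>n. is_ideal (J n)) \<and> (\<forall>n. J n \<subseteq> J (Suc n))" using Jid h unfolding J_def by blast
  hence "\<exists>N. \<forall>n\<ge>N. J n = J N" using noe unfolding noetherian_ring_def by blast
  then obtain N where N: "\<forall>n\<ge>N. J n = J N" by blast
  have IJ: "I n = J n \<inter> Rg 0" for n
  proof -
    have "I n \<subseteq> Rg 0" using h unfolding is_ideal_in_def by blast
    thus ?thesis unfolding J_def using gcomp_at[OF gok_R[OF gr]] by auto
  qed
  show "\<exists>N. \<forall>n\<ge>N. I n = I N" using N IJ by metis
qed

lemma R0_finite_length:
  assumes noe: "noetherian_ring TYPE('r)" and art: "artinian_ring_on (Rg 0)"
  shows "clen (is_ideal_in (Rg 0)) {0} (Rg 0) \<noteq> \<infinity>"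
proof -
  let ?P = "is_ideal_in (Rg 0)"
  have acc: "\<forall>I::nat \<Rightarrow> 'r set. (\<forall>n. ?P (I n)) \<and> (\<forall>n. I n \<subseteq> I (Suc n)) \<longrightarrow> (\<exists>N. \<forall>n\<ge>N. I n = I N)"
    by (rule R0_acc[OF noe])
  have dcc: "\<forall>I::nat \<Rightarrow> 'r set. (\<forall>n. ?P (I n)) \<and> (\<forall>n. I (Suc n) \<subseteq> I n) \<longrightarrow> (\<exists>N. \<forall>n\<ge>N. I n = I N)"
    using art unfolding artinian_ring_on_def by blast
  have PR: "?P (Rg 0)" unfolding is_ideal_in_def using R0_0[OF gr] R_add[OF gr] R0_mult[OF gr] by blast
  have P0: "?P {0}" unfolding is_ideal_in_def using R0_0[OF gr] by auto
  have sub: "\<And>X. ?P X \<Longrightarrow> X \<subseteq> Rg 0" unfolding is_ideal_in_def by blast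
  let ?S = "{I. ?P I \<and> clen ?P I (Rg 0) = \<infinity>}"
  show ?thesis
  proof
    assume inf: "clen ?P {0} (Rg 0) = \<infinity>"
    hence "{0} \<in> ?S" using P0 by blast
    hence ne: "?S \<noteq> {}" by blast
    have SQ: "\<forall>X\<in>?S. ?P X" by blast
    have "\<exists>M\<in>?S. \<forall>X\<in>?S. \<not> M \<subset> X" by (rule acc_max[OF acc ne SQ])
    then obtain I where II: "I \<in> ?S" and Imax: "\<forall>X\<in>?S. \<not> I \<subset> X" by blast
    from II have I: "?P I" "clen ?P I (Rg 0) = \<infinity>" by auto
    have "I \<noteq> Rg 0"
    proof
      assume "I = Rg 0"
      hence "clen ?P I (Rg 0) = 0" using clen_trivial[of ?P "Rg 0"] by simp
      thus False using I(2) by simp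
    qed
    hence IR: "I \<subset> Rg 0" using sub I(1) by blast
    let ?T = "{J. ?P J \<and> I \<subset> J}"
    have neT: "?T \<noteq> {}" using PR IR by blast
    have TQ: "\<forall>X\<in>?T. ?P X" by blast
    have "\<exists>M\<in>?T. \<forall>X\<in>?T. \<not> X \<subset> M" by (rule dcc_min[OF dcc neT TQ])
    then obtain N where NN: "N \<in> ?T" and Nmin: "\<forall>X\<in>?T. \<not> X \<subset> N" by blast
    from NN have N: "?P N" "I \<subset> N" by auto
    have "clen ?P I (Rg 0) \<le> clen ?P I N + clen ?P N (Rg 0)"
      by (rule clen_split[OF R0I_good N(1) PR]) (use N sub in auto)
    moreover have "clen ?P I N \<le> enat 1"
    proof (rule clen_le)
      fix L k assume c: "ischain ?P I N L k"
      show "k \<le> 1"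
      proof (rule ccontr)
        assume "\<not> k \<le> 1"
        hence k2: "Suc (Suc 0) \<le> k" by simp
        have "L 0 \<subset> L (Suc 0)" "L (Suc 0) \<subset> L (Suc (Suc 0))" using c k2 unfolding ischain_def by auto
        moreover have "I \<subseteq> L 0" "L (Suc (Suc 0)) \<subseteq> N" "?P (L (Suc 0))"
          using c k2 unfolding ischain_def by auto
        ultimately have "L (Suc 0) \<in> ?T" "L (Suc 0) \<subset> N" by auto
        thus False using Nmin by blast
      qed
    qed
    moreover have "clen ?P N (Rg 0) \<noteq> \<infinity>"
    proof
      assume "clen ?P N (Rg 0) = \<infinity>" hence "N \<in> ?S" using N(1) by blast
      thus False using Imax N(2) by blast
    qed
    moreover obtain b where b: "clen ?P N (Rg 0) = enat b" using \<open>clen ?P N (Rg 0) \<noteq> \<infinity>\<close> by auto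
    ultimately have "clen ?P I (Rg 0) \<le> enat 1 + enat b" by (metis add_right_mono order_trans)
    hence "clen ?P I (Rg 0) \<le> enat (1 + b)" by simp
    hence "clen ?P I (Rg 0) \<noteq> \<infinity>" using enat_ord_simps(5) by (metis infinity_ileE)
    thus False using I(2) by simp
  qed
qed

end

context fixes scale :: "'r::comm_ring_1 \<Rightarrow> 'm::ab_group_add \<Rightarrow> 'm" and Rg Eg
  assumes gm: "graded_module scale Rg Eg" and gr: "graded_ring Rg"
begin

interpretation M: module scale by (rule E_mod[OF gm gr])

lemma r0sub_sub: "r0sub scale Rg X \<Longrightarrow> x \<in> X \<Longrightarrow> y \<in> X \<Longrightarrow> x - y \<in> X"
proof -
  assume X: "r0sub scale Rg X" and xy: "x \<in> X" "y \<in> X"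
  have "scale (- 1) y \<in> X" using X xy R_neg[OF gr R_one[OF gr]] unfolding r0sub_def by blast
  hence "- y \<in> X" by simp
  hence "x + - y \<in> X" using X xy unfolding r0sub_def by blast
  thus ?thesis by simp
qed

lemma PM_good: "goodP (r0sub scale Rg)"
  unfolding goodP_def
proof (intro conjI allI impI)
  fix X assume X: "r0sub scale Rg X"
  show "subgrp X" unfolding subgrp_def using X r0sub_sub[OF X] unfolding r0sub_def by blast
next
  fix X Y assume X: "r0sub scale Rg X" and Y: "r0sub scale Rg Y"
  show "r0sub scale Rg (X \<inter> Y)" using X Y unfolding r0sub_def by blast
  show "r0sub scale Rg (ssum X Y)" unfolding r0sub_def
  proof (intro conjI ballI)
    have "0 + 0 \<in> ssum X Y" using X Y unfolding r0sub_def ssum_def by blast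
    thus "0 \<in> ssum X Y" by simp
  next
    fix u v assume "u \<in> ssum X Y" "v \<in> ssum X Y"
    then obtain a b c d where h: "a \<in> X" "b \<in> Y" "u = a + b" "c \<in> X" "d \<in> Y" "v = c + d" unfolding ssum_def by blast
    have "a + c \<in> X" "b + d \<in> Y" using h X Y unfolding r0sub_def by blast+
    moreover have "u + v = (a + c) + (b + d)" using h by (simp add: algebra_simps)
    ultimately show "u + v \<in> ssum X Y" unfolding ssum_def by blast
  next
    fix r u assume r: "r \<in> Rg 0" and "u \<in> ssum X Y"
    then obtain a b where h: "a \<in> X" "b \<in> Y" "u = a + b" unfolding ssum_def by blast
    have "scale r a \<in> X" "scale r b \<in> Y" using h X Y r unfolding r0sub_def by blast+
    moreover have "scale r u = scale r a + scale r b" using h by (simp add: M.scale_right_distrib)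
    ultimately show "scale r u \<in> ssum X Y" unfolding ssum_def by blast
  qed
qed

lemma msp_r0sub: "r0sub scale Rg (msp scale Rg Y)"
  unfolding r0sub_def
proof (intro conjI ballI)
  show "0 \<in> msp scale Rg Y" by (rule mspI[where a="\<lambda>_. 0"]) (simp_all add: R0_0[OF gr])
next
  fix x y assume x: "x \<in> msp scale Rg Y" and y: "y \<in> msp scale Rg Y"
  obtain a where a: "\<forall>z. a z \<in> Rg 0" "x = (\<Sum>z\<in>Y. scale (a z) z)" using x by (rule mspE)
  obtain b where b: "\<forall>z. b z \<in> Rg 0" "y = (\<Sum>z\<in>Y. scale (b z) z)" using y by (rule mspE)
  have "x + y = (\<Sum>z\<in>Y. scale (a z + b z) z)" using a b by (simp add: sum.distrib M.scale_left_distrib)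
  moreover have "\<forall>z. a z + b z \<in> Rg 0" using a b R_add[OF gr] by blast
  ultimately show "x + y \<in> msp scale Rg Y" by (intro mspI)
next
  fix c x assume c: "c \<in> Rg 0" and x: "x \<in> msp scale Rg Y"
  obtain a where a: "\<forall>z. a z \<in> Rg 0" "x = (\<Sum>z\<in>Y. scale (a z) z)" using x by (rule mspE)
  have "scale c x = (\<Sum>z\<in>Y. scale (c * a z) z)" using a by (simp add: M.scale_sum_right)
  moreover have "\<forall>z. c * a z \<in> Rg 0" using a c R0_mult[OF gr] by blast
  ultimately show "scale c x \<in> msp scale Rg Y" by (intro mspI)
qed

lemma r0sub_0: "r0sub scale Rg X \<Longrightarrow> 0 \<in> X" unfolding r0sub_def by blast

lemma msp_empty: "msp scale Rg {} = {0}"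
proof -
  have "0 \<in> msp scale Rg {}" by (rule mspI[where a="\<lambda>_. 0"]) (simp_all add: R0_0[OF gr])
  moreover have "msp scale Rg {} \<subseteq> {0}" by (auto elim: mspE)
  ultimately show ?thesis by blast
qed

lemma msp_insert:
  assumes fY: "finite Y" and y: "y \<notin> Y"
  shows "msp scale Rg Y \<subseteq> msp scale Rg (insert y Y)"
    and "u \<in> msp scale Rg (insert y Y) \<Longrightarrow> \<exists>a c. a \<in> Rg 0 \<and> c \<in> msp scale Rg Y \<and> u = c + scale a y"
proof -
  show "msp scale Rg Y \<subseteq> msp scale Rg (insert y Y)"
  proof
    fix u assume "u \<in> msp scale Rg Y"
    then obtain a where a: "\<forall>z. a z \<in> Rg 0" "u = (\<Sum>z\<in>Y. scale (a z) z)" by (rule mspE)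
    have "(\<Sum>z\<in>Y. scale ((a(y := 0)) z) z) = (\<Sum>z\<in>Y. scale (a z) z)"
      by (rule sum.cong) (use y in auto)
    hence "u = (\<Sum>z\<in>insert y Y. scale ((a(y := 0)) z) z)"
      using fY y a(2) by simp
    moreover have "\<forall>z. (a(y := 0)) z \<in> Rg 0" using a(1) R0_0[OF gr] by simp
    ultimately show "u \<in> msp scale Rg (insert y Y)" by (intro mspI)
  qed
  assume "u \<in> msp scale Rg (insert y Y)"
  then obtain a where a: "\<forall>z. a z \<in> Rg 0" "u = (\<Sum>z\<in>insert y Y. scale (a z) z)" by (rule mspE)
  have "u = (\<Sum>z\<in>Y. scale (a z) z) + scale (a y) y" using fY y a(2) by (simp add: add.commute)
  moreover have "(\<Sum>z\<in>Y. scale (a z) z) \<in> msp scale Rg Y" using a(1) by (intro mspI) auto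
  ultimately show "\<exists>a c. a \<in> Rg 0 \<and> c \<in> msp scale Rg Y \<and> u = c + scale a y" using a(1) by blast
qed

lemma msp_len:
  assumes L0: "clen (is_ideal_in (Rg 0)) {0} (Rg 0) = enat L0" and fY: "finite Y"
  shows "clen (r0sub scale Rg) {0} (msp scale Rg Y) \<le> enat (card Y * L0)"
  using fY
proof (induction Y rule: finite_induct)
  case empty
  thus ?case using clen_trivial[of "r0sub scale Rg" "{0}"] by (simp add: msp_empty)
next
  case (insert y Y)
  let ?C = "msp scale Rg Y" and ?B = "msp scale Rg (insert y Y)"
  have CB: "?C \<subseteq> ?B" by (rule msp_insert(1)[OF insert(1,2)])
  have spl: "clen (r0sub scale Rg) {0} ?B \<le> clen (r0sub scale Rg) {0} ?C + clen (r0sub scale Rg) ?C ?B"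
    by (rule clen_split[OF PM_good msp_r0sub msp_r0sub]) (use r0sub_0[OF msp_r0sub] CB in auto)
  have mp: "clen (r0sub scale Rg) ?C ?B \<le> clen (is_ideal_in (Rg 0)) {0} (Rg 0)"
  proof (rule clen_map[where f="\<lambda>L. {a \<in> Rg 0. scale a y \<in> L}"])
    fix L assume L: "r0sub scale Rg L" "?C \<subseteq> L" "L \<subseteq> ?B"
    show "is_ideal_in (Rg 0) {a \<in> Rg 0. scale a y \<in> L} \<and> {0} \<subseteq> {a \<in> Rg 0. scale a y \<in> L} \<and> {a \<in> Rg 0. scale a y \<in> L} \<subseteq> Rg 0"
      unfolding is_ideal_in_def
    proof (intro conjI ballI)
      show "{0} \<subseteq> {a \<in> Rg 0. scale a y \<in> L}" using R0_0[OF gr] r0sub_0[OF L(1)] by auto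
      thus "0 \<in> {a \<in> Rg 0. scale a y \<in> L}" by blast
      fix a b assume "a \<in> {a \<in> Rg 0. scale a y \<in> L}" "b \<in> {a \<in> Rg 0. scale a y \<in> L}"
      thus "a + b \<in> {a \<in> Rg 0. scale a y \<in> L}" using L(1) R_add[OF gr]
        unfolding r0sub_def by (auto simp: M.scale_left_distrib)
    next
      fix r a assume r: "r \<in> Rg 0" and "a \<in> {a \<in> Rg 0. scale a y \<in> L}"
      thus "r * a \<in> {a \<in> Rg 0. scale a y \<in> L}" using L(1) R0_mult[OF gr]
        unfolding r0sub_def by (auto simp flip: M.scale_scale)
    qed auto
  next
    fix L L' assume L: "r0sub scale Rg L" "?C \<subseteq> L" "L' \<subseteq> ?B" "r0sub scale Rg L'" "L \<subset> L'"
    have sub: "{a \<in> Rg 0. scale a y \<in> L} \<subseteq> {a \<in> Rg 0. scale a y \<in> L'}" using L(5) by blast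
    obtain z where z: "z \<in> L'" "z \<notin> L" using L(5) by blast
    have zB: "z \<in> ?B" using z(1) L(3) by blast
    obtain a c where ac: "a \<in> Rg 0" "c \<in> ?C" "z = c + scale a y"
      using msp_insert(2)[OF insert(1,2) zB] by blast
    have cL': "c \<in> L'" using ac(2) L(2) L(5) by blast
    have "z - c \<in> L'" by (rule r0sub_sub[OF L(4) z(1) cL'])
    moreover have "z - c = scale a y" using ac(3) by simp
    ultimately have "scale a y \<in> L'" by simp
    hence "a \<in> {a \<in> Rg 0. scale a y \<in> L'}" using ac(1) by blast
    moreover have "a \<notin> {a \<in> Rg 0. scale a y \<in> L}"
    proof
      assume "a \<in> {a \<in> Rg 0. scale a y \<in> L}"
      hence "scale a y \<in> L" by blast
      moreover have "c \<in> L" using ac(2) L(2) by blast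
      ultimately have "c + scale a y \<in> L" using L(1) unfolding r0sub_def by blast
      thus False using z(2) ac(3) by simp
    qed
    ultimately show "{a \<in> Rg 0. scale a y \<in> L} \<subset> {a \<in> Rg 0. scale a y \<in> L'}" using sub by blast
  qed
  have "clen (r0sub scale Rg) {0} ?C + clen (r0sub scale Rg) ?C ?B \<le> enat (card Y * L0) + enat L0"
    using insert(3) mp L0 by (intro add_mono) simp_all
  hence "clen (r0sub scale Rg) {0} ?B \<le> enat (card Y * L0) + enat L0" using spl by (rule order_trans[rotated])
  thus ?case using insert(1,2) by (simp add: add.commute)
qed

end

lemma ssum_mono2: "Y \<subseteq> Y' \<Longrightarrow> ssum X Y \<subseteq> ssum X Y'"
  unfolding ssum_def by blast

lemma dsum_len:
  assumes g: "goodP P" and PA: "P A" and PB: "P B" and AB: "A \<inter> B \<subseteq> {0}" and P0: "P {0}"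
    and a: "clen P {0} A = enat a" and b: "clen P {0} B = enat b"
  shows "clen P {0} (ssum A B) = enat (a + b)"
proof -
  have sg: "\<And>X. P X \<Longrightarrow> subgrp X" using g unfolding goodP_def by blast
  have PAB: "P (ssum A B)" using g PA PB unfolding goodP_def by blast
  have A0: "0 \<in> A" and B0: "0 \<in> B" using sg[OF PA] sg[OF PB] unfolding subgrp_def by auto
  have A_AB: "A \<subseteq> ssum A B" by (rule ssum_sup(1)[OF sg[OF PB]])
  have B_AB: "B \<subseteq> ssum A B" by (rule ssum_sup(2)[OF sg[OF PA]])
  have m1: "clen P A (ssum A B) \<le> clen P {0} B"
  proof (rule clen_map[where f="\<lambda>L. L \<inter> B"])
    fix L assume L: "P L" "A \<subseteq> L" "L \<subseteq> ssum A B"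
    have "0 \<in> L" using L(2) A0 by blast
    thus "P (L \<inter> B) \<and> {0} \<subseteq> L \<inter> B \<and> L \<inter> B \<subseteq> B" using g L(1) PB B0 unfolding goodP_def by blast
  next
    fix L L' assume L: "P L" "A \<subseteq> L" "L' \<subseteq> ssum A B" "P L'" "L \<subset> L'"
    have eq: "ssum X B = ssum A B" if "P X" "A \<subseteq> X" "X \<subseteq> ssum A B" for X
    proof
      show "ssum X B \<subseteq> ssum A B" by (rule ssum_le[OF sg[OF PAB] that(3) B_AB])
      show "ssum A B \<subseteq> ssum X B" by (rule ssum_mono[OF that(2)])
    qed
    have "L \<inter> B \<noteq> L' \<inter> B"
    proof
      assume "L \<inter> B = L' \<inter> B"
      moreover have "ssum L B = ssum L' B" using eq[OF L(1,2)] eq[OF L(4)] L by blast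
      ultimately have "L = L'" using modular_eq[OF sg[OF L(4)] _ _ _ sg[OF PB] sg[OF L(1)]] L(5) by blast
      thus False using L(5) by blast
    qed
    thus "L \<inter> B \<subset> L' \<inter> B" using L(5) by blast
  qed
  have m2: "clen P {0} B \<le> clen P A (ssum A B)"
  proof (rule clen_map[where f="\<lambda>L. ssum A L"])
    fix L assume L: "P L" "{0} \<subseteq> L" "L \<subseteq> B"
    show "P (ssum A L) \<and> A \<subseteq> ssum A L \<and> ssum A L \<subseteq> ssum A B"
      using g PA L(1) ssum_sup(1)[OF sg[OF L(1)]] ssum_mono2[OF L(3)] unfolding goodP_def by blast
  next
    fix L L' assume L: "P L" "{0} \<subseteq> L" "L' \<subseteq> B" "P L'" "L \<subset> L'"
    have "ssum A L \<subseteq> ssum A L'" using ssum_mono2 L(5) by blast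
    moreover have "ssum A L \<noteq> ssum A L'"
    proof
      assume e: "ssum A L = ssum A L'"
      obtain x where x: "x \<in> L'" "x \<notin> L" using L(5) by blast
      have "x \<in> ssum A L'" using ssum_sup(2)[OF sg[OF PA]] x(1) by blast
      hence "x \<in> ssum A L" using e by simp
      then obtain u l where ul: "u \<in> A" "l \<in> L" "x = u + l" unfolding ssum_def by blast
      have "u = x - l" using ul by simp
      moreover have "x \<in> B" "l \<in> B" using x(1) ul(2) L(3) L(5) by blast+
      ultimately have "u \<in> B" using sg[OF PB] unfolding subgrp_def by blast
      hence "u = 0" using ul(1) AB by blast
      thus False using ul x by simp
    qed
    ultimately show "ssum A L \<subset> ssum A L'" by blast
  qed
  have cAB: "clen P A (ssum A B) = enat b" using m1 m2 b by simp
  have "clen P {0} (ssum A B) \<le> clen P {0} A + clen P A (ssum A B)"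
    by (rule clen_split[OF g PA PAB]) (use A0 A_AB in auto)
  hence le: "clen P {0} (ssum A B) \<le> enat (a + b)" using a cAB by simp
  have ge: "enat (a + b) \<le> clen P {0} (ssum A B)"
    by (rule clen_concat[OF a cAB P0 PA]) (use A0 A_AB in auto)
  show ?thesis using le ge by simp
qed

definition SD :: "(int \<Rightarrow> 'm::ab_group_add set) \<Rightarrow> int set \<Rightarrow> 'm set" where
  "SD Eg D = {\<Sum>t\<in>D. c t | c. \<forall>t. c t \<in> Eg t}"

context fixes scale :: "'r::comm_ring_1 \<Rightarrow> 'm::ab_group_add \<Rightarrow> 'm" and Rg Eg
  assumes gm: "graded_module scale Rg Eg" and gr: "graded_ring Rg"
begin

interpretation M: module scale by (rule E_mod[OF gm gr])

lemma Eg_r0sub: "r0sub scale Rg (Eg t)"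
  unfolding r0sub_def using gG[OF gok_E[OF gm gr]] E_scale[OF gm gr, of _ 0] by simp

lemma SD_empty: "SD Eg {} = {0}"
proof -
  have "\<forall>t. (\<lambda>_. 0) t \<in> Eg t" using gG(1)[OF gok_E[OF gm gr]] by simp
  hence "sum (\<lambda>_. 0) {} \<in> SD Eg {}" unfolding SD_def by (intro CollectI exI[of _ "\<lambda>_. 0"]) simp
  thus ?thesis unfolding SD_def by auto
qed

lemma SD_insert: "finite D \<Longrightarrow> t \<notin> D \<Longrightarrow> SD Eg (insert t D) = ssum (SD Eg D) (Eg t)"
proof
  assume D: "finite D" "t \<notin> D"
  show "SD Eg (insert t D) \<subseteq> ssum (SD Eg D) (Eg t)"
  proof
    fix x assume "x \<in> SD Eg (insert t D)"
    then obtain c where c: "\<forall>t. c t \<in> Eg t" "x = (\<Sum>s\<in>insert t D. c s)" unfolding SD_def by blast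
    have "x = (\<Sum>s\<in>D. c s) + c t" using c(2) D by (simp add: add.commute)
    moreover have "(\<Sum>s\<in>D. c s) \<in> SD Eg D" unfolding SD_def using c(1) by blast
    ultimately show "x \<in> ssum (SD Eg D) (Eg t)" unfolding ssum_def using c(1) by blast
  qed
  show "ssum (SD Eg D) (Eg t) \<subseteq> SD Eg (insert t D)"
  proof
    fix x assume "x \<in> ssum (SD Eg D) (Eg t)"
    then obtain u v where uv: "u \<in> SD Eg D" "v \<in> Eg t" "x = u + v" unfolding ssum_def by blast
    then obtain c where c: "\<forall>t. c t \<in> Eg t" "u = (\<Sum>s\<in>D. c s)" unfolding SD_def by blast
    let ?c = "c(t := v)"
    have "(\<Sum>s\<in>D. ?c s) = (\<Sum>s\<in>D. c s)" by (rule sum.cong) (use D in auto)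
    hence "x = (\<Sum>s\<in>insert t D. ?c s)" using D uv c by (simp add: add.commute)
    moreover have "\<forall>s. ?c s \<in> Eg s" using c uv by simp
    ultimately show "x \<in> SD Eg (insert t D)" unfolding SD_def by blast
  qed
qed

lemma SD_r0sub: "finite D \<Longrightarrow> r0sub scale Rg (SD Eg D)"
proof (induction D rule: finite_induct)
  case empty
  thus ?case unfolding SD_empty r0sub_def by simp
next
  case (insert t D)
  thus ?case unfolding SD_insert[OF insert(1,2)] using PM_good[OF gm gr] Eg_r0sub unfolding goodP_def by blast
qed

lemma SD_disj: "finite D \<Longrightarrow> t \<notin> D \<Longrightarrow> SD Eg D \<inter> Eg t \<subseteq> {0}"
proof
  fix y assume D: "finite D" "t \<notin> D" and y: "y \<in> SD Eg D \<inter> Eg t"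
  then obtain c where c: "\<forall>t. c t \<in> Eg t" "y = (\<Sum>s\<in>D. c s)" unfolding SD_def by blast
  have "gcomp Eg y t = (\<Sum>s\<in>D. gcomp Eg (c s) t)" unfolding c(2) by (simp add: gcomp_sum[OF gok_E[OF gm gr]])
  also have "\<dots> = 0"
  proof (rule sum.neutral, rule ballI)
    fix s assume "s \<in> D" hence "s \<noteq> t" using D by blast
    thus "gcomp Eg (c s) t = 0" using gcomp_off[OF gok_E[OF gm gr] c(1)[rule_format, of s], of t] by simp
  qed
  finally have "gcomp Eg y t = 0" .
  moreover have "gcomp Eg y t = y" using y gcomp_at[OF gok_E[OF gm gr]] by blast
  ultimately show "y \<in> {0}" by simp
qed

lemma SD_len:
  assumes "finite D" "\<forall>t\<in>D. clen (r0sub scale Rg) {0} (Eg t) = enat (L t)"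
  shows "clen (r0sub scale Rg) {0} (SD Eg D) = enat (\<Sum>t\<in>D. L t)"
  using assms
proof (induction D rule: finite_induct)
  case empty
  thus ?case using clen_trivial[of "r0sub scale Rg" "{0}"] by (simp add: SD_empty zero_enat_def)
next
  case (insert t D)
  have "clen (r0sub scale Rg) {0} (ssum (SD Eg D) (Eg t)) = enat ((\<Sum>t\<in>D. L t) + L t)"
  proof (rule dsum_len[OF PM_good[OF gm gr] SD_r0sub[OF insert(1)] Eg_r0sub SD_disj[OF insert(1,2)]])
    show "r0sub scale Rg {0}" unfolding r0sub_def by simp
    show "clen (r0sub scale Rg) {0} (SD Eg D) = enat (\<Sum>t\<in>D. L t)" using insert by simp
    show "clen (r0sub scale Rg) {0} (Eg t) = enat (L t)" using insert by simp
  qed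
  thus ?case using insert(1,2) SD_insert[OF insert(1,2)] by (simp add: add.commute)
qed

lemma SD_univ:
  assumes "finite D" "\<forall>t. t \<notin> D \<longrightarrow> Eg t = {0}"
  shows "SD Eg D = UNIV"
proof -
  have "y \<in> SD Eg D" for y
  proof -
    have "{t. gcomp Eg y t \<noteq> 0} \<subseteq> D"
    proof
      fix t assume "t \<in> {t. gcomp Eg y t \<noteq> 0}"
      moreover have "gcomp Eg y t \<in> Eg t" by (rule gcomp_in[OF gok_E[OF gm gr]])
      ultimately show "t \<in> D" using assms(2) by blast
    qed
    hence "y = (\<Sum>t\<in>D. gcomp Eg y t)" by (rule gcomp_sum_eq[OF gok_E[OF gm gr] assms(1)])
    thus ?thesis unfolding SD_def using gcomp_in[OF gok_E[OF gm gr]] by blast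
  qed
  thus ?thesis by blast
qed

end

lemma final_comb:
  fixes Lt :: "int \<Rightarrow> nat" and d T0 a B :: int and e q :: nat
  assumes ad: "a \<le> d" and dT: "d \<le> T0" and TB: "T0 \<le> B"
    and pos: "\<forall>t. d \<le> t \<and> t \<le> T0 \<longrightarrow> Lt t \<ge> 1" and zero: "\<forall>t. t > T0 \<longrightarrow> Lt t = 0"
    and e: "e = (\<Sum>t\<in>{a..B}. Lt t)" and q: "q = (\<Sum>t\<in>{a..d}. Lt t)"
  shows "T0 \<le> d + int e - int q"
    and "(T0 = d + int e - int q) \<longleftrightarrow>
          ((\<forall>t. d + 1 \<le> t \<and> t \<le> d + int e - int q \<longrightarrow> Lt t = 1) \<and>
           (\<forall>t. t \<ge> d + int e - int q + 1 \<longrightarrow> Lt t = 0))"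
proof -
  let ?s = "\<Sum>t\<in>{d<..T0}. Lt t"
  have u1: "{a..B} = {a..d} \<union> ({d<..T0} \<union> {T0<..B})" using ad dT TB by auto
  have d1: "{a..d} \<inter> ({d<..T0} \<union> {T0<..B}) = {}" using dT by auto
  have d2: "{d<..T0} \<inter> {T0<..B} = {}" by auto
  have "e = q + (?s + (\<Sum>t\<in>{T0<..B}. Lt t))"
    unfolding e q u1 by (simp add: sum.union_disjoint[OF _ _ d1] sum.union_disjoint[OF _ _ d2])
  moreover have "(\<Sum>t\<in>{T0<..B}. Lt t) = 0" using zero by simp
  ultimately have es: "e = q + ?s" by simp
  have card: "card {d<..T0} = nat (T0 - d)" by simp
  have s1: "?s = (\<Sum>t\<in>{d<..T0}. 1) + (\<Sum>t\<in>{d<..T0}. Lt t - 1)"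
  proof (subst sum.distrib[symmetric], rule sum.cong[OF refl])
    fix t assume "t \<in> {d<..T0}"
    hence "Lt t \<ge> 1" using pos by auto
    thus "Lt t = 1 + (Lt t - 1)" by simp
  qed
  hence sge: "?s \<ge> nat (T0 - d)" using card by simp
  have deq: "d + int e - int q = d + int ?s" using es by simp
  show "T0 \<le> d + int e - int q" using deq sge dT by linarith
  show "(T0 = d + int e - int q) \<longleftrightarrow>
          ((\<forall>t. d + 1 \<le> t \<and> t \<le> d + int e - int q \<longrightarrow> Lt t = 1) \<and>
           (\<forall>t. t \<ge> d + int e - int q + 1 \<longrightarrow> Lt t = 0))"
  proof
    assume T: "T0 = d + int e - int q"
    hence "int ?s = T0 - d" using deq by linarith
    hence "?s = nat (T0 - d)" by linarith
    hence "(\<Sum>t\<in>{d<..T0}. Lt t - 1) = 0" using s1 card by simp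
    hence "\<forall>t\<in>{d<..T0}. Lt t - 1 = 0" by simp
    hence one: "\<forall>t. d + 1 \<le> t \<and> t \<le> T0 \<longrightarrow> Lt t = 1"
    proof (intro allI impI)
      fix t assume h0: "\<forall>t\<in>{d<..T0}. Lt t - 1 = 0" and t: "d + 1 \<le> t \<and> t \<le> T0"
      hence "Lt t - 1 = 0" by auto
      moreover have "Lt t \<ge> 1" using pos t by auto
      ultimately show "Lt t = 1" by simp
    qed
    show "(\<forall>t. d + 1 \<le> t \<and> t \<le> d + int e - int q \<longrightarrow> Lt t = 1) \<and>
           (\<forall>t. t \<ge> d + int e - int q + 1 \<longrightarrow> Lt t = 0)"
      using one zero T by auto
  next
    assume h: "(\<forall>t. d + 1 \<le> t \<and> t \<le> d + int e - int q \<longrightarrow> Lt t = 1) \<and>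
           (\<forall>t. t \<ge> d + int e - int q + 1 \<longrightarrow> Lt t = 0)"
    have le: "T0 \<le> d + int e - int q" using deq sge dT by linarith
    show "T0 = d + int e - int q"
    proof (rule ccontr)
      assume "T0 \<noteq> d + int e - int q"
      hence lt: "T0 + 1 \<le> d + int e - int q" using le by simp
      hence "Lt (T0 + 1) = 1" using h dT by auto
      moreover have "Lt (T0 + 1) = 0" using zero by simp
      ultimately show False by simp
    qed
  qed
qed

theorem lemma2p3:
  fixes scale :: "'r::comm_ring_1 \<Rightarrow> 'm::ab_group_add \<Rightarrow> 'm"
    and Rg :: "nat \<Rightarrow> 'r set" and Eg :: "int \<Rightarrow> 'm set" and G :: "'m set" and d :: int
  assumes "noetherian_ring TYPE('r)"
    and "standard_graded Rg"
    and "local_ring_on (Rg 0)" and "artinian_ring_on (Rg 0)"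
    and "graded_module scale Rg Eg"
    and "finitely_generated_module scale"
    and "module_dim_eq scale 0"
    and "minimal_homogeneous_generators scale Eg G"
    and "d = Max {n. \<exists>g\<in>G. g \<in> Eg n \<and> g \<noteq> 0}"
  defines "e \<equiv> the_enat (r0_length scale Rg UNIV)"
    and "q \<equiv> the_enat (\<Sum>i\<in>{i. i \<le> d \<and> r0_length scale Rg (Eg i) \<noteq> 0}. r0_length scale Rg (Eg i))"
  shows "(reg_dim0 scale Rg Eg \<le> ereal (real_of_int (d + int e - int q))) \<and>
         (reg_dim0 scale Rg Eg = ereal (real_of_int (d + int e - int q)) \<longleftrightarrow>
           ((\<forall>t. d + 1 \<le> t \<and> t \<le> d + int e - int q \<longrightarrow> r0_length scale Rg (Eg t) = 1) \<and>
            (\<forall>t. t \<ge> d + int e - int q + 1 \<longrightarrow> r0_length scale Rg (Eg t) = 0)))"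
proof -
  note noe = assms(1) and std = assms(2) and art = assms(4) and gm = assms(5) and fg = assms(6)
    and dim = assms(7) and mg = assms(8) and d_def = assms(9)
  have gr: "graded_ring Rg" using std unfolding standard_graded_def by (elim conjE)
  have modl: "module scale" by (rule E_mod[OF gm gr])
  interpret M: module scale by (rule modl)
  have gE: "gok Eg" by (rule gok_E[OF gm gr])
  have gR: "gok Rg" by (rule gok_R[OF gr])
  note GF = minimal_gens_facts[OF modl fg mg]
  obtain X where X: "finite X" "X \<subseteq> Rg 1" "Rg 1 \<subseteq> rsp Rg X" using R1_gen[OF gr noe] by blast
  have RM: "\<And>n. Rg n \<subseteq> rsp Rg (Mon X n)" by (rule std_mon[OF gr std X])
  note H = gm gr GF(1) GF(2) GF(3) GF(4) X(1) X(2) RM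
  have nil: "\<forall>x\<in>X. \<exists>N. x ^ N \<in> annihilator scale"
    using dim0_nilpotent[OF gm gr noe dim] X(2) by blast
  obtain Nf where Nf: "\<forall>x\<in>X. x ^ Nf x \<in> annihilator scale" using bchoice[OF nil] by blast
  have Enz: "\<exists>y::'m. y \<noteq> 0"
  proof (rule ccontr)
    assume "\<not> (\<exists>y::'m. y \<noteq> 0)"
    hence all0: "\<forall>y::'m. y = 0" by blast
    have "prime_chain_ann scale 0" using dim unfolding module_dim_eq_def by (elim conjE)
    then obtain P where P: "is_prime_ideal (P 0)" "annihilator scale \<subseteq> P 0"
      unfolding prime_chain_ann_def by auto
    have PI: "is_ideal (P 0)" "P 0 \<noteq> UNIV" using P(1) unfolding is_prime_ideal_def by simp_all
    have "1 \<in> annihilator scale" unfolding annihilator_def using all0 by blast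
    hence one: "1 \<in> P 0" using P(2) by blast
    have "r \<in> P 0" for r using is_idealD(3)[OF PI(1) one, of r] by simp
    hence "P 0 = UNIV" by blast
    thus False using PI(2) by blast
  qed
  have Gne: "G \<noteq> {}"
  proof
    assume "G = {}"
    hence "M.span G = {0}" by simp
    thus False using GF(4) Enz by blast
  qed
  have degin: "\<And>g. g \<in> G \<Longrightarrow> g \<in> Eg (deg Eg g)" by (rule deg_in[OF H])
  have dset: "{n. \<exists>g\<in>G. g \<in> Eg n \<and> g \<noteq> 0} = deg Eg ` G"
  proof
    show "{n. \<exists>g\<in>G. g \<in> Eg n \<and> g \<noteq> 0} \<subseteq> deg Eg ` G"
    proof
      fix n assume "n \<in> {n. \<exists>g\<in>G. g \<in> Eg n \<and> g \<noteq> 0}"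
      then obtain g where g: "g \<in> G" "g \<in> Eg n" by blast
      have "deg Eg g = n" by (rule deg_unique[OF H g])
      thus "n \<in> deg Eg ` G" using g(1) by blast
    qed
    show "deg Eg ` G \<subseteq> {n. \<exists>g\<in>G. g \<in> Eg n \<and> g \<noteq> 0}" using degin GF(2) by blast
  qed
  have fD: "finite (deg Eg ` G)" using GF(1) by simp
  have neD: "deg Eg ` G \<noteq> {}" using Gne by simp
  have dmax: "d = Max (deg Eg ` G)" using d_def dset by simp
  have deg_le_d: "\<And>g. g \<in> G \<Longrightarrow> deg Eg g \<le> d" unfolding dmax using fD by simp
  obtain g0 where g0: "g0 \<in> G" "deg Eg g0 = d" using Max_in[OF fD neD] dmax by auto
  define a where "a = Min (deg Eg ` G)"
  have a_le: "\<And>g. g \<in> G \<Longrightarrow> a \<le> deg Eg g" unfolding a_def using fD by simp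
  have ad: "a \<le> d" using a_le[OF g0(1)] g0(2) by simp
  have V1: "Eg t = {0}" if t: "t < a" for t
    by (rule vanish_crit[OF H]) (use a_le t in force)
  define Nsum where "Nsum = sum Nf X"
  have V2: "Eg t = {0}" if t: "t \<ge> d + int Nsum + 1" for t
  proof (rule vanish_crit[OF H], intro ballI impI)
    fix g m assume g: "g \<in> G" "deg Eg g \<le> t" and m: "m \<in> Mon X (nat (t - deg Eg g))"
    have "nat (t - deg Eg g) \<ge> sum Nf X + 1" using deg_le_d[OF g(1)] t unfolding Nsum_def by linarith
    then obtain x r where xr: "x \<in> X" "m = x ^ Nf x * r" using Mon_pigeon[OF X(1) _ m] by blast
    have "scale (x ^ Nf x) g = 0" using Nf xr(1) unfolding annihilator_def by blast
    hence "scale r (scale (x ^ Nf x) g) = 0" by simp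
    thus "scale m g = 0" using xr(2) by (simp add: mult.commute)
  qed
  have V3: "Eg (t + 1) = {0}" if t: "d \<le> t" "Eg t = {0}" for t
  proof (rule vanish_crit[OF H], intro ballI impI)
    fix g m assume g: "g \<in> G" "deg Eg g \<le> t + 1" and m: "m \<in> Mon X (nat (t + 1 - deg Eg g))"
    have dg: "deg Eg g \<le> t" using deg_le_d[OF g(1)] t by simp
    have "nat (t + 1 - deg Eg g) = Suc (nat (t - deg Eg g))" using dg by simp
    then obtain x m' where xm: "x \<in> X" "m' \<in> Mon X (nat (t - deg Eg g))" "m = x * m'"
      using Mon_Suc[OF X(1)] m by metis
    have "m' \<in> Rg (nat (t - deg Eg g))" using Mon_R[OF H] xm(2) by blast
    hence "scale m' g \<in> Eg (int (nat (t - deg Eg g)) + deg Eg g)" by (rule E_scale[OF gm gr _ degin[OF g(1)]])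
    moreover have "int (nat (t - deg Eg g)) + deg Eg g = t" using dg by simp
    ultimately have "scale m' g = 0" using t(2) by simp
    thus "scale m g = 0" using xm(3) by (simp flip: M.scale_scale)
  qed
  define B where "B = d + int Nsum + 1"
  define D where "D = {a..B}"
  have fDD: "finite D" unfolding D_def by simp
  have out: "\<forall>t. t \<notin> D \<longrightarrow> Eg t = {0}"
  proof (intro allI impI)
    fix t assume "t \<notin> D"
    hence "t < a \<or> t \<ge> d + int Nsum + 1" unfolding D_def B_def by auto
    thus "Eg t = {0}" using V1 V2 by blast
  qed
  obtain L0 where L0: "clen (is_ideal_in (Rg 0)) {0} (Rg 0) = enat L0"
    using R0_finite_length[OF gr noe art] by auto
  have fin_t: "\<exists>n. clen (r0sub scale Rg) {0} (Eg t) = enat n" for t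
  proof -
    let ?F = "(\<lambda>(g, m). scale m g) ` (SIGMA g:{g\<in>G. deg Eg g \<le> t}. Mon X (nat (t - deg Eg g)))"
    have fF: "finite ?F" using GF(1) Mon_finite[OF X(1)] by auto
    have "clen (r0sub scale Rg) {0} (Eg t) \<le> clen (r0sub scale Rg) {0} (msp scale Rg ?F)"
      by (rule clen_mono) (use span_deg[OF H, of t] in auto)
    also have "\<dots> \<le> enat (card ?F * L0)" by (rule msp_len[OF gm gr L0 fF])
    finally show ?thesis by (metis enat_ile)
  qed
  define Lt where "Lt t = the_enat (clen (r0sub scale Rg) {0} (Eg t))" for t
  have Lt_eq: "clen (r0sub scale Rg) {0} (Eg t) = enat (Lt t)" for t
    using fin_t[of t] unfolding Lt_def by auto
  have r00: "\<And>X. r0sub scale Rg X \<Longrightarrow> 0 \<in> X" unfolding r0sub_def by blast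
  have rl: "r0_length scale Rg (Eg t) = enat (Lt t)" for t
    using clen_zero_lower[OF r00, where M="Eg t"] Lt_eq[of t] by (simp add: r0_length_clen)
  have rlU: "r0_length scale Rg UNIV = enat (\<Sum>t\<in>D. Lt t)"
  proof -
    have "r0_length scale Rg UNIV = clen (r0sub scale Rg) {0} (SD Eg D)"
      using clen_zero_lower[OF r00, where M=UNIV] SD_univ[OF gm gr fDD out] by (simp add: r0_length_clen)
    also have "\<dots> = enat (\<Sum>t\<in>D. Lt t)" by (rule SD_len[OF gm gr fDD]) (simp add: Lt_eq)
    finally show ?thesis .
  qed
  have e_eq: "e = (\<Sum>t\<in>{a..B}. Lt t)" unfolding e_def rlU D_def by simp
  have Lt0: "Lt t = 0" if "Eg t = {0}" for t
  proof -
    have "clen (r0sub scale Rg) {0} (Eg t) = 0" using that clen_trivial by simp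
    thus ?thesis using Lt_eq[of t] by (simp add: zero_enat_def)
  qed
  have Lt1: "Lt t \<ge> 1" if "Eg t \<noteq> {0}" for t
  proof -
    have sub: "{0} \<subseteq> Eg t" using gG(1)[OF gE] by blast
    have "ischain (r0sub scale Rg) {0} (Eg t) (\<lambda>i. if i = 0 then {0} else Eg t) 1"
      unfolding ischain_def using that sub Eg_r0sub[OF gm gr, of t]
      by (auto simp: r0sub_def)
    hence "enat 1 \<le> clen (r0sub scale Rg) {0} (Eg t)" by (rule clen_ge)
    thus ?thesis using Lt_eq[of t] by simp
  qed
  have q_eq: "q = (\<Sum>t\<in>{a..d}. Lt t)"
  proof -
    let ?I = "{i. i \<le> d \<and> r0_length scale Rg (Eg i) \<noteq> 0}"
    have IS: "?I \<subseteq> {a..d}"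
    proof
      fix i assume "i \<in> ?I"
      hence i: "i \<le> d" "r0_length scale Rg (Eg i) \<noteq> 0" by auto
      have Li: "Lt i \<noteq> 0" using i(2) rl[of i] by (auto simp: zero_enat_def)
      have "\<not> i < a"
      proof
        assume "i < a" hence "Eg i = {0}" by (rule V1)
        hence "Lt i = 0" by (rule Lt0)
        thus False using Li by simp
      qed
      thus "i \<in> {a..d}" using i by simp
    qed
    have fI: "finite ?I" using IS finite_subset by blast
    have "(\<Sum>i\<in>?I. r0_length scale Rg (Eg i)) = (\<Sum>i\<in>?I. of_nat (Lt i))"
      by (rule sum.cong) (simp_all add: rl of_nat_eq_enat)
    also have "\<dots> = of_nat (\<Sum>i\<in>?I. Lt i)" by simp
    also have "(\<Sum>i\<in>?I. Lt i) = (\<Sum>i\<in>{a..d}. Lt i)"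
    proof (rule sum.mono_neutral_left[OF _ IS])
      show "finite {a..d}" by simp
      show "\<forall>i\<in>{a..d} - ?I. Lt i = 0"
      proof
        fix i assume "i \<in> {a..d} - ?I"
        hence "r0_length scale Rg (Eg i) = 0" by auto
        thus "Lt i = 0" using rl[of i] by (simp add: zero_enat_def)
      qed
    qed
    finally show ?thesis unfolding q_def by (simp add: of_nat_eq_enat)
  qed
  define Tset where "Tset = {t. Eg t \<noteq> {0}}"
  have TD: "Tset \<subseteq> D" using out unfolding Tset_def by blast
  have fT: "finite Tset" using TD fDD finite_subset by blast
  have dT: "d \<in> Tset"
  proof -
    have "g0 \<in> Eg d" using degin[OF g0(1)] g0(2) by simp
    thus ?thesis unfolding Tset_def using GF(2) g0(1) by auto
  qed
  define T0 where "T0 = Max Tset"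
  have T0in: "T0 \<in> Tset" unfolding T0_def using fT dT by (intro Max_in) auto
  have T0ge: "\<And>t. t \<in> Tset \<Longrightarrow> t \<le> T0" unfolding T0_def using fT by simp
  have dT0: "d \<le> T0" using T0ge[OF dT] .
  have T0B: "T0 \<le> B" using TD T0in unfolding D_def by auto
  have above: "Eg t = {0}" if "t > T0" for t using T0ge that unfolding Tset_def by force
  have between: "Eg t \<noteq> {0}" if t: "d \<le> t" "t \<le> T0" for t
  proof
    assume z: "Eg t = {0}"
    have "Eg (t + int k) = {0}" for k
    proof (induction k)
      case 0 thus ?case using z by simp
    next
      case (Suc k)
      have "Eg (t + int k + 1) = {0}" by (rule V3) (use t Suc in auto)
      thus ?case by (simp add: ac_simps)
    qed
    hence "Eg (t + int (nat (T0 - t))) = {0}" .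
    hence "Eg T0 = {0}" using t by simp
    thus False using T0in unfolding Tset_def by blast
  qed
  have pos: "\<forall>t. d \<le> t \<and> t \<le> T0 \<longrightarrow> Lt t \<ge> 1" using between Lt1 by blast
  have zero: "\<forall>t. t > T0 \<longrightarrow> Lt t = 0" using above Lt0 by blast
  note FC = final_comb[OF ad dT0 T0B pos zero e_eq q_eq]
  have reg: "reg_dim0 scale Rg Eg = ereal (real_of_int T0)"
  proof -
    let ?Hs = "{n. H0_Rplus scale Rg \<inter> Eg n \<noteq> {0}}"
    have H00: "0 \<in> H0_Rplus scale Rg" unfolding H0_Rplus_def by (intro CollectI exI[of _ 0]) simp
    have Hs_le: "n \<le> T0" if "n \<in> ?Hs" for n
    proof -
      have "Eg n \<noteq> {0}" using that H00 by blast
      thus ?thesis using T0ge unfolding Tset_def by blast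
    qed
    have T0Hs: "T0 \<in> ?Hs"
    proof -
      obtain x where x: "x \<in> Eg T0" "x \<noteq> 0" using T0in gG(1)[OF gE] unfolding Tset_def by blast
      have "x \<in> H0_Rplus scale Rg" unfolding H0_Rplus_def
      proof (intro CollectI exI[of _ 1] allI impI)
        fix c :: "nat \<Rightarrow> 'r" assume "\<forall>i<1. c i \<in> Rplus Rg"
        hence c0: "gcomp Rg (c 0) 0 = 0" using Rplus_iff[OF gr] by auto
        have "\<forall>n. gcomp Eg (scale (c 0) x) n = 0"
        proof
          fix n
          show "gcomp Eg (scale (c 0) x) n = 0"
          proof (cases "T0 < n")
            case True
            have "gcomp Eg (scale (c 0) x) n \<in> Eg n" by (rule gcomp_in[OF gE])
            thus ?thesis using above[OF True] by simp
          next
            case False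
            thus ?thesis using ecomp_scale_homog[OF gm gr x(1), of "c 0" n] c0
              by (cases "T0 = n") auto
          qed
        qed
        hence "scale (c 0) x = 0" using gcomp_zero_iff[OF gE] by blast
        thus "scale (\<Prod>i<1. c i) x = 0" by simp
      qed
      thus ?thesis using x by blast
    qed
    have "{a0 scale Rg Eg + ereal (real i) |i. i \<in> {0..(0::nat)}} = {a0 scale Rg Eg}" by auto
    hence "reg_dim0 scale Rg Eg = a0 scale Rg Eg" unfolding reg_dim0_def by simp
    also have "a0 scale Rg Eg = ereal (real_of_int T0)"
      unfolding a0_def
    proof (rule antisym)
      show "Sup ((\<lambda>n. ereal (real_of_int n)) ` ?Hs) \<le> ereal (real_of_int T0)"
      proof (rule Sup_least)
        fix y assume "y \<in> (\<lambda>n. ereal (real_of_int n)) ` ?Hs"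
        then obtain n where n: "n \<in> ?Hs" "y = ereal (real_of_int n)" by blast
        have "n \<le> T0" by (rule Hs_le[OF n(1)])
        thus "y \<le> ereal (real_of_int T0)" using n(2) by simp
      qed
      show "ereal (real_of_int T0) \<le> Sup ((\<lambda>n. ereal (real_of_int n)) ` ?Hs)"
        by (rule Sup_upper) (use T0Hs in blast)
    qed
    finally show ?thesis .
  qed
  have one_iff: "r0_length scale Rg (Eg t) = 1 \<longleftrightarrow> Lt t = 1" for t by (simp add: rl one_enat_def)
  have zero_iff: "r0_length scale Rg (Eg t) = 0 \<longleftrightarrow> Lt t = 0" for t by (simp add: rl zero_enat_def)
  have c1: "ereal (real_of_int T0) \<le> ereal (real_of_int (d + int e - int q))" using FC(1) by simp
  have c2: "(ereal (real_of_int T0) = ereal (real_of_int (d + int e - int q))) = (T0 = d + int e - int q)"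
    by (simp only: ereal.inject of_int_eq_iff)
  show ?thesis unfolding reg one_iff zero_iff c2 using c1 FC(2) by blast
qed

end
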